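(* Let $L=\langle S,A,\to\rangle$ be a labelled transition system. For all $x,y\in\{o,b\}$, the relation $\mathrel{\underline{\leftrightarrow}}^{ed}_{(x,y)}$ ($(x,y)$-generic bisimilarity with explicit divergence) coincides with the relation $\equiv^{ed}_{E(x,y)}$ (winning for Duplicator in the $E(x,y)$-generic bisimulation game with explicit divergence).
   Context: A labelled transition system (LTS) is $L=\langle S,A,\to\rangle$ with $S$ a set of states, $A$ a set of actions containing a special internal action $\tau$, and $\to\subseteq S\times A\times S$; write $s\xrightarrow{a}t$. Let $\twoheadrightarrow$ be the reflexive-transitive closure and $\twoheadrightarrow^+$ the transitive closure of $\xrightarrow{\tau}$. For $R\subseteq S\times S$ and $s,s',t\in S$: $s\twoheadrightarrow_{o,R,t}s'$ iff $s\twoheadrightarrow s'$; $s\twoheadrightarrow_{b,R,t}s'$ iff $s\twoheadrightarrow s'$, $t\,R\,s$ and $t\,R\,s'$. For $x,y\in\{o,b\}$, a symmetric $R\subseteq S\times S$ is an $(x,y)$-generic bisimulation if whenever $s\,R\,t$ and $s\xrightarrow{a}s'$, either $a=\tau$ and $s'\,R\,t$, or there are $t',t_1,t_2$ with $t\twoheadrightarrow_{x,R,s}t_1\xrightarrow{a}t_2\twoheadrightarrow_{y,R,s'}t'$ and $s'\,R\,t'$. A symmetric $R$ is an $(x,y)$-generic bisimulation with explicit divergence if it is an $(x,y)$-generic bisimulation and for all $s\,R\,t$, if there is an infinite sequence $s=s_0\xrightarrow{\tau}s_1\xrightarrow{\tau}s_2\cdots$, then there are a state $t'$ with $t\twoheadrightarrow^+t'$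 and some $k$ with $s_k\,R\,t'$. Write $s\mathrel{\underline{\leftrightarrow}}^{ed}_{(x,y)}t$ iff some such $R$ relates $s$ and $t$. Game with explicit divergence. Let $\frown,\smile$ be formal tags and $E\subseteq\{\frown,\smile\}$. The game is played by Spoiler and Duplicator on Spoiler-owned configurations $\langle (s,t),c,m,r\rangle_S$ and Duplicator-owned $\langle (s,t),c,m,r\rangle_D$, with $(s,t)\in S\times S$, $c\in (A\times S)\cup\{\dagger\}$, $m\in (S\times\{\frown,\smile\})\cup\{\dagger\}$, $r\in\{*,\checkmark\}$. From $\langle (s,t),c,m,r\rangle_S$ Spoiler may: (S1) move to $\langle (s,t),c,m,*\rangle_D$ if $c\neq\dagger$; (S2a) for some $s\xrightarrow{a}s'$, move to $\langle (s,t),(a,s'),(t,\frown),*\rangle_D$ if $c=\dagger$; (S2b) for some $s\xrightarrow{a}s'$, move to $\langle (s,t),(a,s'),(t,\frown),\checkmark\rangle_D$ if $c\neq (a,s')$; (S3) for some $t\xrightarrow{a}t'$, move to $\langle (t,s),(a,t'),(s,\frown),\checkmark\rangle_D$. From $\langle (u,v),(a,u'),(\bar v,f),r\rangle_D$ Duplicator may: (D1) move to $\langle (u',\bar v),\dagger,\dagger,*\rangle_S$ if $a=\tau$; (D2) if $f=\frown$ and $\bar v\xrightarrow{a}v'$: (a) move to $\langle (u',v'),(a,u'),(v',\smile),*\rangle_S$, or (b) move to $\langle (u',v'),\dagger,\dagger,\checkmark\rangle_S$, or (c) only if $\smile\in E$, move to $\langle (u,v),(a,u'),(v',\smile),*\rangle_S$;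 (D3) for some $\bar v\xrightarrow{\tau}v'$: (a) move to $\langle (u,v'),(a,u'),(v',f),*\rangle_S$, or (b) only if $f=\smile$, move to $\langle (u',v'),\dagger,\dagger,\checkmark\rangle_S$, or (c) only if $f\in E$, move to $\langle (u,v),(a,u'),(v',f),*\rangle_S$. Duplicator wins a finite play if Spoiler gets stuck, and an infinite play if it contains infinitely many $\checkmark$ rewards; all other plays are won by Spoiler. Write $s\equiv^{ed}_E t$ iff Duplicator has a strategy winning all plays from $\langle (s,t),\dagger,\dagger,*\rangle_S$. $E(x,y)$ is the smallest set with $\frown\in E(o,y)$ and $\smile\in E(x,o)$ for all $x,y\in\{o,b\}$. *)

theory Defs
  imports Main
begin

text \<open>An LTS is given by a transition predicate tr s a t over state type 's and
  action type 'a, together with the distinguished internal action tau.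
  The state set S is the whole type 's.\<close>

datatype mode = Om | Bm

definition tau_steps :: "('s \<Rightarrow> 'a \<Rightarrow> 's \<Rightarrow> bool) \<Rightarrow> 'a \<Rightarrow> 's \<Rightarrow> 's \<Rightarrow> bool" where
  "tau_steps tr tau = (\<lambda>s t. tr s tau t)\<^sup>*\<^sup>*"

definition tau_steps_plus :: "('s \<Rightarrow> 'a \<Rightarrow> 's \<Rightarrow> bool) \<Rightarrow> 'a \<Rightarrow> 's \<Rightarrow> 's \<Rightarrow> bool" where
  "tau_steps_plus tr tau = (\<lambda>s t. tr s tau t)\<^sup>+\<^sup>+"

definition gsteps :: "('s \<Rightarrow> 'a \<Rightarrow> 's \<Rightarrow> bool) \<Rightarrow> 'a \<Rightarrow> mode \<Rightarrow> ('s \<Rightarrow> 's \<Rightarrow> bool)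
    \<Rightarrow> 's \<Rightarrow> 's \<Rightarrow> 's \<Rightarrow> bool" where
  "gsteps tr tau x R t s s' \<longleftrightarrow>
     (case x of
        Om \<Rightarrow> tau_steps tr tau s s'
      | Bm \<Rightarrow> tau_steps tr tau s s' \<and> R t s \<and> R t s')"

definition generic_bisim :: "('s \<Rightarrow> 'a \<Rightarrow> 's \<Rightarrow> bool) \<Rightarrow> 'a \<Rightarrow> mode \<Rightarrow> mode
    \<Rightarrow> ('s \<Rightarrow> 's \<Rightarrow> bool) \<Rightarrow> bool" where
  "generic_bisim tr tau x y R \<longleftrightarrow>
     symp R \<and>
     (\<forall>s t a s'. R s t \<and> tr s a s' \<longrightarrow>
        (a = tau \<and> R s' t) \<or>
        (\<exists>t' t1 t2. gsteps tr tau x R s t t1 \<and> tr t1 a t2 \<and>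
                     gsteps tr tau y R s' t2 t' \<and> R s' t'))"

definition generic_bisim_ed :: "('s \<Rightarrow> 'a \<Rightarrow> 's \<Rightarrow> bool) \<Rightarrow> 'a \<Rightarrow> mode \<Rightarrow> mode
    \<Rightarrow> ('s \<Rightarrow> 's \<Rightarrow> bool) \<Rightarrow> bool" where
  "generic_bisim_ed tr tau x y R \<longleftrightarrow>
     generic_bisim tr tau x y R \<and>
     (\<forall>s t. R s t \<longrightarrow>
        (\<forall>f. f 0 = s \<and> (\<forall>i. tr (f i) tau (f (Suc i))) \<longrightarrow>
           (\<exists>t' k. tau_steps_plus tr tau t t' \<and> R (f k) t')))"

definition bisimilar_ed :: "('s \<Rightarrow> 'a \<Rightarrow> 's \<Rightarrow> bool) \<Rightarrow> 'a \<Rightarrow> mode \<Rightarrow> mode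
    \<Rightarrow> 's \<Rightarrow> 's \<Rightarrow> bool" where
  "bisimilar_ed tr tau x y s t \<longleftrightarrow> (\<exists>R. generic_bisim_ed tr tau x y R \<and> R s t)"

datatype tag = Frown | Smile
datatype owner = Spoiler | Duplicator
datatype reward = Star | Check

text \<open>Configuration <(s,t), c, m, r>_owner; the dagger is represented by None.\<close>
datatype ('s, 'a) conf =
  Conf owner "'s \<times> 's" "('a \<times> 's) option" "('s \<times> tag) option" reward

fun conf_owner :: "('s, 'a) conf \<Rightarrow> owner" where
  "conf_owner (Conf p _ _ _ _) = p"

fun conf_reward :: "('s, 'a) conf \<Rightarrow> reward" where
  "conf_reward (Conf _ _ _ _ r) = r"

inductive game_move :: "('s \<Rightarrow> 'a \<Rightarrow> 's \<Rightarrow> bool) \<Rightarrow> 'a \<Rightarrow> tag set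
    \<Rightarrow> ('s, 'a) conf \<Rightarrow> ('s, 'a) conf \<Rightarrow> bool"
  for tr :: "'s \<Rightarrow> 'a \<Rightarrow> 's \<Rightarrow> bool" and tau :: 'a and E :: "tag set" where
  S1: "c \<noteq> None \<Longrightarrow>
     game_move tr tau E (Conf Spoiler (s, t) c m r) (Conf Duplicator (s, t) c m Star)"
| S2a: "c = None \<Longrightarrow> tr s a s' \<Longrightarrow>
     game_move tr tau E (Conf Spoiler (s, t) c m r)
       (Conf Duplicator (s, t) (Some (a, s')) (Some (t, Frown)) Star)"
| S2b: "c \<noteq> Some (a, s') \<Longrightarrow> tr s a s' \<Longrightarrow>
     game_move tr tau E (Conf Spoiler (s, t) c m r)
       (Conf Duplicator (s, t) (Some (a, s')) (Some (t, Frown)) Check)"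
| S3: "tr t a t' \<Longrightarrow>
     game_move tr tau E (Conf Spoiler (s, t) c m r)
       (Conf Duplicator (t, s) (Some (a, t')) (Some (s, Frown)) Check)"
| D1: "a = tau \<Longrightarrow>
     game_move tr tau E (Conf Duplicator (u, v) (Some (a, u')) (Some (vb, f)) r)
       (Conf Spoiler (u', vb) None None Star)"
| D2a: "f = Frown \<Longrightarrow> tr vb a v' \<Longrightarrow>
     game_move tr tau E (Conf Duplicator (u, v) (Some (a, u')) (Some (vb, f)) r)
       (Conf Spoiler (u', v') (Some (a, u')) (Some (v', Smile)) Star)"
| D2b: "f = Frown \<Longrightarrow> tr vb a v' \<Longrightarrow>
     game_move tr tau E (Conf Duplicator (u, v) (Some (a, u')) (Some (vb, f)) r)
       (Conf Spoiler (u', v') None None Check)"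
| D2c: "f = Frown \<Longrightarrow> tr vb a v' \<Longrightarrow> Smile \<in> E \<Longrightarrow>
     game_move tr tau E (Conf Duplicator (u, v) (Some (a, u')) (Some (vb, f)) r)
       (Conf Spoiler (u, v) (Some (a, u')) (Some (v', Smile)) Star)"
| D3a: "tr vb tau v' \<Longrightarrow>
     game_move tr tau E (Conf Duplicator (u, v) (Some (a, u')) (Some (vb, f)) r)
       (Conf Spoiler (u, v') (Some (a, u')) (Some (v', f)) Star)"
| D3b: "tr vb tau v' \<Longrightarrow> f = Smile \<Longrightarrow>
     game_move tr tau E (Conf Duplicator (u, v) (Some (a, u')) (Some (vb, f)) r)
       (Conf Spoiler (u', v') None None Check)"
| D3c: "tr vb tau v' \<Longrightarrow> f \<in> E \<Longrightarrow>
     game_move tr tau E (Conf Duplicator (u, v) (Some (a, u')) (Some (vb, f)) r)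
       (Conf Spoiler (u, v) (Some (a, u')) (Some (v', f)) Star)"

definition dup_strategy :: "('s \<Rightarrow> 'a \<Rightarrow> 's \<Rightarrow> bool) \<Rightarrow> 'a \<Rightarrow> tag set
    \<Rightarrow> (('s, 'a) conf list \<Rightarrow> ('s, 'a) conf) \<Rightarrow> bool" where
  "dup_strategy tr tau E \<sigma> \<longleftrightarrow>
     (\<forall>h. h \<noteq> [] \<and> conf_owner (last h) = Duplicator \<and>
          (\<exists>c'. game_move tr tau E (last h) c') \<longrightarrow>
          game_move tr tau E (last h) (\<sigma> h))"

definition finite_play :: "('s \<Rightarrow> 'a \<Rightarrow> 's \<Rightarrow> bool) \<Rightarrow> 'a \<Rightarrow> tag set
    \<Rightarrow> (('s, 'a) conf list \<Rightarrow> ('s, 'a) conf) \<Rightarrow> ('s, 'a) conf \<Rightarrow> ('s, 'a) conf list \<Rightarrow> bool" where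
  "finite_play tr tau E \<sigma> c0 ps \<longleftrightarrow>
     ps \<noteq> [] \<and> ps ! 0 = c0 \<and>
     (\<forall>i. Suc i < length ps \<longrightarrow>
        game_move tr tau E (ps ! i) (ps ! Suc i) \<and>
        (conf_owner (ps ! i) = Duplicator \<longrightarrow> ps ! Suc i = \<sigma> (take (Suc i) ps)))"

definition infinite_play :: "('s \<Rightarrow> 'a \<Rightarrow> 's \<Rightarrow> bool) \<Rightarrow> 'a \<Rightarrow> tag set
    \<Rightarrow> (('s, 'a) conf list \<Rightarrow> ('s, 'a) conf) \<Rightarrow> ('s, 'a) conf \<Rightarrow> (nat \<Rightarrow> ('s, 'a) conf) \<Rightarrow> bool" where
  "infinite_play tr tau E \<sigma> c0 p \<longleftrightarrow>
     p 0 = c0 \<and>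
     (\<forall>i. game_move tr tau E (p i) (p (Suc i)) \<and>
        (conf_owner (p i) = Duplicator \<longrightarrow> p (Suc i) = \<sigma> (map p [0..<Suc i])))"

definition dup_wins :: "('s \<Rightarrow> 'a \<Rightarrow> 's \<Rightarrow> bool) \<Rightarrow> 'a \<Rightarrow> tag set
    \<Rightarrow> (('s, 'a) conf list \<Rightarrow> ('s, 'a) conf) \<Rightarrow> ('s, 'a) conf \<Rightarrow> bool" where
  "dup_wins tr tau E \<sigma> c0 \<longleftrightarrow>
     dup_strategy tr tau E \<sigma> \<and>
     (\<forall>ps. finite_play tr tau E \<sigma> c0 ps \<and>
           \<not> (\<exists>c'. game_move tr tau E (last ps) c') \<longrightarrow>
           conf_owner (last ps) = Spoiler) \<and>
     (\<forall>p. infinite_play tr tau E \<sigma> c0 p \<longrightarrow>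
           (\<exists>\<^sub>\<infinity>i. conf_reward (p i) = Check))"

definition game_equiv :: "('s \<Rightarrow> 'a \<Rightarrow> 's \<Rightarrow> bool) \<Rightarrow> 'a \<Rightarrow> tag set \<Rightarrow> 's \<Rightarrow> 's \<Rightarrow> bool" where
  "game_equiv tr tau E s t \<longleftrightarrow>
     (\<exists>\<sigma>. dup_wins tr tau E \<sigma> (Conf Spoiler (s, t) None None Star))"

definition Eset :: "mode \<Rightarrow> mode \<Rightarrow> tag set" where
  "Eset x y = (if x = Om then {Frown} else {}) \<union> (if y = Om then {Smile} else {})"

end

theory Submission
  imports Defs
begin


lemma Eset_Frown: "Frown \<in> Eset x y \<longleftrightarrow> x = Om"
  by (simp add: Eset_def)
lemma Eset_Smile: "Smile \<in> Eset x y \<longleftrightarrow> y = Om"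
  by (simp add: Eset_def)

lemma mvD:
  assumes "game_move tr tau E (Conf Duplicator (u,w) (Some(a,u')) (Some(v,f)) r) c'"
  shows "(a = tau \<and> c' = Conf Spoiler (u',v) None None Star) \<or>
 (\<exists>v'. f = Frown \<and> tr v a v' \<and> c' = Conf Spoiler (u',v') (Some(a,u')) (Some(v',Smile)) Star) \<or>
 (\<exists>v'. f = Frown \<and> tr v a v' \<and> c' = Conf Spoiler (u',v') None None Check) \<or>
 (\<exists>v'. f = Frown \<and> tr v a v' \<and> Smile \<in> E \<and> c' = Conf Spoiler (u,w) (Some(a,u')) (Some(v',Smile)) Star) \<or>
 (\<exists>v'. tr v tau v' \<and> c' = Conf Spoiler (u,v') (Some(a,u')) (Some(v',f)) Star) \<or>
 (\<exists>v'. tr v tau v' \<and> f = Smile \<and> c' = Conf Spoiler (u',v') None None Check) \<or>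
 (\<exists>v'. tr v tau v' \<and> f \<in> E \<and> c' = Conf Spoiler (u,w) (Some(a,u')) (Some(v',f)) Star)"
  using assms by (cases rule: game_move.cases) auto

lemma mvS:
  assumes "game_move tr tau E (Conf Spoiler (s,t) c m r) c'"
  shows "(c \<noteq> None \<and> c' = Conf Duplicator (s,t) c m Star) \<or>
 (\<exists>a s'. c = None \<and> tr s a s' \<and> c' = Conf Duplicator (s,t) (Some(a,s')) (Some(t,Frown)) Star) \<or>
 (\<exists>a s'. c \<noteq> Some(a,s') \<and> tr s a s' \<and> c' = Conf Duplicator (s,t) (Some(a,s')) (Some(t,Frown)) Check) \<or>
 (\<exists>a t'. tr t a t' \<and> c' = Conf Duplicator (t,s) (Some(a,t')) (Some(s,Frown)) Check)"
  using assms by (cases rule: game_move.cases) auto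

lemma fp_snoc:
  assumes "finite_play tr tau E \<sigma> c0 h" "game_move tr tau E (last h) c"
    "conf_owner (last h) = Duplicator \<Longrightarrow> c = \<sigma> h"
  shows "finite_play tr tau E \<sigma> c0 (h @ [c])"
proof -
  have h: "h \<noteq> []" "h ! 0 = c0" and st: "\<And>i. Suc i < length h \<Longrightarrow>
        game_move tr tau E (h ! i) (h ! Suc i) \<and>
        (conf_owner (h ! i) = Duplicator \<longrightarrow> h ! Suc i = \<sigma> (take (Suc i) h))"
    using assms(1) unfolding finite_play_def by auto
  have A: "h @ [c] \<noteq> []" by simp
  have B: "(h @ [c]) ! 0 = c0" using h by (simp add: nth_append)
  have C: "game_move tr tau E ((h @ [c]) ! i) ((h @ [c]) ! Suc i) \<and>
        (conf_owner ((h @ [c]) ! i) = Duplicator \<longrightarrow> (h @ [c]) ! Suc i = \<sigma> (take (Suc i) (h @ [c])))"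
    if i: "Suc i < length (h @ [c])" for i
  proof (cases "Suc i < length h")
    case True
    then show ?thesis using st[OF True] by (simp add: nth_append)
  next
    case False
    then have "Suc i = length h" using i by simp
    then have e: "(h @ [c]) ! i = last h" "(h @ [c]) ! Suc i = c" "take (Suc i) (h @ [c]) = h"
      using h(1) by (auto simp: nth_append last_conv_nth dest: sym)
    show ?thesis unfolding e using assms(2,3) by simp
  qed
  show ?thesis unfolding finite_play_def using A B C by blast
qed

lemma dup_next:
  assumes "dup_wins tr tau E \<sigma> c0" "finite_play tr tau E \<sigma> c0 h" "conf_owner (last h) = Duplicator"
  shows "game_move tr tau E (last h) (\<sigma> h)"
proof (cases "\<exists>c'. game_move tr tau E (last h) c'")
  case True
  moreover have "h \<noteq> []" using assms(2) by (simp add: finite_play_def)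
  ultimately show ?thesis using assms(1,3) unfolding dup_wins_def dup_strategy_def by blast
next
  case False
  then have "conf_owner (last h) = Spoiler" using assms(1,2) unfolding dup_wins_def by blast
  with assms(3) show ?thesis by simp
qed

lemma fp_ext:
  assumes "dup_wins tr tau E \<sigma> c0" "finite_play tr tau E \<sigma> c0 h" "conf_owner (last h) = Duplicator"
  shows "finite_play tr tau E \<sigma> c0 (h @ [\<sigma> h])"
  using fp_snoc[OF assms(2) dup_next[OF assms]] by simp

lemma fp_extS:
  assumes "finite_play tr tau E \<sigma> c0 h" "conf_owner (last h) = Spoiler" "game_move tr tau E (last h) c"
  shows "finite_play tr tau E \<sigma> c0 (h @ [c])"
  using fp_snoc[OF assms(1,3)] assms(2) by simp

lemma no_star_forever:
  assumes W: "dup_wins tr tau E \<sigma> c0"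
    and step: "\<And>h. P h \<Longrightarrow> finite_play tr tau E \<sigma> c0 h \<and>
       (\<exists>ext. ext \<noteq> [] \<and> (\<forall>c\<in>set ext. conf_reward c = Star) \<and> P (h @ ext))"
  shows "\<not> P h0"
proof
  assume P0: "P h0"
  define nx where "nx h = (SOME ext. ext \<noteq> [] \<and> (\<forall>c\<in>set ext. conf_reward c = Star) \<and> P (h @ ext))" for h
  have nx: "nx h \<noteq> [] \<and> (\<forall>c\<in>set (nx h). conf_reward c = Star) \<and> P (h @ nx h)" if "P h" for h
    using step[OF that] unfolding nx_def by (rule someI_ex[OF conjunct2])
  define H where "H n = ((\<lambda>h. h @ nx h) ^^ n) h0" for n
  have HS: "H (Suc n) = H n @ nx (H n)" for n by (simp add: H_def)
  have H0: "H 0 = h0" by (simp add: H_def)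
  have PH: "P (H n)" for n by (induction n) (use P0 nx in \<open>auto simp: HS H0\<close>)
  have lenH: "length (H n) \<ge> length h0 + n" for n
  proof (induction n)
    case 0 then show ?case by (simp add: H0)
  next
    case (Suc n)
    have "nx (H n) \<noteq> []" using nx[OF PH] by blast
    then have "length (nx (H n)) \<ge> 1" by (cases "nx (H n)") auto
    then show ?case using Suc by (simp add: HS)
  qed
  have mono: "\<exists>ys. H m = H n @ ys" if "n \<le> m" for n m
    using that
  proof (induction m rule: dec_induct)
    case base then show ?case by auto
  next
    case (step m) then show ?case by (auto simp: HS)
  qed
  have starH: "conf_reward (H n ! j) = Star" if "length h0 \<le> j" "j < length (H n)" for n j
    using that
  proof (induction n)
    case 0 then show ?case by (simp add: H0)
  next
    case (Suc n)
    show ?case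
    proof (cases "j < length (H n)")
      case True then show ?thesis using Suc by (simp add: HS nth_append)
    next
      case False
      then have "H (Suc n) ! j \<in> set (nx (H n))" using Suc.prems by (simp add: HS nth_append)
      then show ?thesis using nx[OF PH] by blast
    qed
  qed
  have h0ne: "h0 \<noteq> []" using step[OF P0] unfolding finite_play_def by blast
  then have lh0: "length h0 \<ge> 1" by (cases h0) auto
  define p where "p i = H i ! i" for i
  have pm: "H m ! i = p i" if im: "i \<le> m" for i m
  proof -
    obtain ys where "H m = H i @ ys" using mono[OF im] by blast
    moreover have "i < length (H i)" using lenH[of i] lh0 by simp
    ultimately show ?thesis by (simp add: p_def nth_append)
  qed
  have ip: "infinite_play tr tau E \<sigma> c0 p"
  proof -
    have "h0 ! 0 = c0" using step[OF P0] unfolding finite_play_def by blast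
    then have A: "p 0 = c0" by (simp add: p_def H0)
    have B: "game_move tr tau E (p i) (p (Suc i)) \<and>
      (conf_owner (p i) = Duplicator \<longrightarrow> p (Suc i) = \<sigma> (map p [0..<Suc i]))" for i
    proof -
    have fp: "finite_play tr tau E \<sigma> c0 (H (Suc i))" using step[OF PH] by blast
    have lt: "Suc i < length (H (Suc i))" using lenH[of "Suc i"] lh0 by simp
    have e1: "H (Suc i) ! i = p i" "H (Suc i) ! Suc i = p (Suc i)" using pm by auto
    have e2: "take (Suc i) (H (Suc i)) = map p [0..<Suc i]"
      by (rule nth_equalityI) (use lt pm in \<open>auto simp del: upt_Suc\<close>)
    show ?thesis
      using fp lt unfolding finite_play_def e1[symmetric] e2[symmetric] by blast
  qed
  show ?thesis unfolding infinite_play_def using A B by blast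
  qed
  then have "\<exists>\<^sub>\<infinity>i. conf_reward (p i) = Check" using W unfolding dup_wins_def by blast
  then obtain i where "i \<ge> length h0" "conf_reward (p i) = Check"
    unfolding cofinite_eq_sequentially frequently_sequentially by blast
  moreover have "i < length (H i)" using lenH[of i] lh0 by simp
  ultimately show False using starH[of i i] by (simp add: p_def)
qed




lemma tau_steps_rt: "tau_steps tr tau = (\<lambda>s t. tr s tau t)\<^sup>*\<^sup>*"
  by (simp add: tau_steps_def)

lemma ts_refl[simp]: "tau_steps tr tau s s"
  by (simp add: tau_steps_def)

lemma ts_step: "tr s tau s' \<Longrightarrow> tau_steps tr tau s' t \<Longrightarrow> tau_steps tr tau s t"
  unfolding tau_steps_def by (rule converse_rtranclp_into_rtranclp)

lemma ts_trans: "tau_steps tr tau s s' \<Longrightarrow> tau_steps tr tau s' t \<Longrightarrow> tau_steps tr tau s t"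
  unfolding tau_steps_def by (rule rtranclp_trans)

lemma ts_one: "tr s tau s' \<Longrightarrow> tau_steps tr tau s s'"
  unfolding tau_steps_def by auto

lemma gsteps_refl: "gsteps tr tau m R s t t \<longleftrightarrow> (m = Bm \<longrightarrow> R s t)"
  by (cases m) (auto simp: gsteps_def)

lemma tsp_I: "tr q tau v \<Longrightarrow> tau_steps tr tau v t \<Longrightarrow> tau_steps_plus tr tau q t"
  unfolding tau_steps_def tau_steps_plus_def by (rule rtranclp_into_tranclp2)

lemma tsp_ne: "tau_steps tr tau q t \<Longrightarrow> q \<noteq> t \<Longrightarrow> tau_steps_plus tr tau q t"
  unfolding tau_steps_def tau_steps_plus_def by (metis rtranclpD)

lemma gsteps_reflI: "(m = Bm \<Longrightarrow> R s t) \<Longrightarrow> gsteps tr tau m R s t t"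
  by (cases m) (auto simp: gsteps_def)

lemma gsteps_ts: "gsteps tr tau m R s a b \<Longrightarrow> tau_steps tr tau a b"
  by (cases m) (auto simp: gsteps_def)

lemma gsteps_R: "gsteps tr tau Bm R s a b \<Longrightarrow> R s a \<and> R s b"
  by (auto simp: gsteps_def)

lemma gsteps_RB: "gsteps tr tau m R s a b \<Longrightarrow> m = Bm \<Longrightarrow> R s a \<and> R s b"
  by (auto simp: gsteps_def)

lemma gsteps_I: "tau_steps tr tau a b \<Longrightarrow> (m = Bm \<Longrightarrow> R s a \<and> R s b) \<Longrightarrow> gsteps tr tau m R s a b"
  by (cases m) (auto simp: gsteps_def)

lemma gsteps_pre: "tr v tau v' \<Longrightarrow> gsteps tr tau m R s v' t \<Longrightarrow> (m = Bm \<Longrightarrow> R s v) \<Longrightarrow> gsteps tr tau m R s v t"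
  by (cases m) (auto simp: gsteps_def intro: ts_step)

lemma gsteps_mono: "gsteps tr tau m R s a b \<Longrightarrow> (\<And>u v. R u v \<Longrightarrow> R' u v) \<Longrightarrow> gsteps tr tau m R' s a b"
  by (cases m) (auto simp: gsteps_def)

lemma mode_cases: "m \<noteq> Om \<longleftrightarrow> m = Bm" by (cases m) auto

context
  fixes tr :: "'s \<Rightarrow> 'a \<Rightarrow> 's \<Rightarrow> bool" and tau :: 'a and x y :: mode
begin

definition goodp :: "'s \<Rightarrow> 's \<Rightarrow> ('s,'a) conf \<Rightarrow> bool" where
  "goodp p q c \<longleftrightarrow> (\<exists>r. c = Conf Spoiler (p,q) None None r) \<or>
     (\<exists>a u' r. c = Conf Spoiler (p,q) (Some (a,u')) (Some (q,Frown)) r \<and> tr p a u') \<or>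
     (y = Bm \<and> (\<exists>a r. c = Conf Spoiler (p,q) (Some(a,p)) (Some(q,Smile)) r))"

definition Rw :: "'s \<Rightarrow> 's \<Rightarrow> bool" where
  "Rw p q \<longleftrightarrow> (\<exists>s0 t0 \<sigma> h. dup_wins tr tau (Eset x y) \<sigma> (Conf Spoiler (s0,t0) None None Star) \<and>
     finite_play tr tau (Eset x y) \<sigma> (Conf Spoiler (s0,t0) None None Star) h \<and> goodp p q (last h))"

definition Rs :: "'s \<Rightarrow> 's \<Rightarrow> bool" where
  "Rs p q \<longleftrightarrow> Rw p q \<or> Rw q p"

lemma goodp_G0: "goodp p q (Conf Spoiler (p,q) None None r)" by (simp add: goodp_def)
lemma goodp_G1: "tr p a u' \<Longrightarrow> goodp p q (Conf Spoiler (p,q) (Some(a,u')) (Some(q,Frown)) r)"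
  by (simp add: goodp_def)
lemma goodp_G2: "y = Bm \<Longrightarrow> goodp p q (Conf Spoiler (p,q) (Some(a,p)) (Some(q,Smile)) r)"
  unfolding goodp_def by blast

lemma Rs_sym: "Rs p q \<Longrightarrow> Rs q p" by (auto simp: Rs_def)

definition cy :: "'s \<Rightarrow> 's \<Rightarrow> bool" where
  "cy u' v \<longleftrightarrow> (\<exists>t'. gsteps tr tau y Rs u' v t' \<and> Rs u' t')"

definition cx :: "'s \<Rightarrow> 'a \<Rightarrow> 's \<Rightarrow> 's \<Rightarrow> bool" where
  "cx u a u' v \<longleftrightarrow> (a = tau \<and> Rs u' v) \<or>
     (\<exists>t1 t2 t'. gsteps tr tau x Rs u v t1 \<and> tr t1 a t2 \<and> gsteps tr tau y Rs u' t2 t' \<and> Rs u' t')"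

lemma cx_pre: "tr v tau v' \<Longrightarrow> (x = Bm \<Longrightarrow> Rs u v) \<Longrightarrow> cx u a u' v' \<Longrightarrow> cx u a u' v"
  unfolding cx_def
proof (elim disjE exE conjE)
  assume st: "tr v tau v'" and B: "x = Bm \<Longrightarrow> Rs u v" and a: "a = tau" "Rs u' v'"
  have "gsteps tr tau x Rs u v v" using B by (rule gsteps_reflI)
  moreover have "gsteps tr tau y Rs u' v' v'" using a by (intro gsteps_reflI)
  ultimately show "(a = tau \<and> Rs u' v) \<or>
     (\<exists>t1 t2 t'. gsteps tr tau x Rs u v t1 \<and> tr t1 a t2 \<and> gsteps tr tau y Rs u' t2 t' \<and> Rs u' t')"
    using st a by blast
next
  fix t1 t2 t'
  assume st: "tr v tau v'" and B: "x = Bm \<Longrightarrow> Rs u v" and g: "gsteps tr tau x Rs u v' t1"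
    "tr t1 a t2" "gsteps tr tau y Rs u' t2 t'" "Rs u' t'"
  have "gsteps tr tau x Rs u v t1" by (rule gsteps_pre[OF st g(1) B])
  then show "(a = tau \<and> Rs u' v) \<or>
     (\<exists>t1 t2 t'. gsteps tr tau x Rs u v t1 \<and> tr t1 a t2 \<and> gsteps tr tau y Rs u' t2 t' \<and> Rs u' t')"
    using g by blast
qed

lemma cy_pre: "tr v tau v' \<Longrightarrow> (y = Bm \<Longrightarrow> Rs u' v) \<Longrightarrow> cy u' v' \<Longrightarrow> cy u' v"
  unfolding cy_def by (elim exE conjE) (blast intro: gsteps_pre)

context
  fixes \<sigma> :: "('s,'a) conf list \<Rightarrow> ('s,'a) conf" and s0 t0 :: 's
  assumes W: "dup_wins tr tau (Eset x y) \<sigma> (Conf Spoiler (s0,t0) None None Star)"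
begin

abbreviation FP where "FP h \<equiv> finite_play tr tau (Eset x y) \<sigma> (Conf Spoiler (s0,t0) None None Star) h"

lemma goodRs: "FP h \<Longrightarrow> goodp p q (last h) \<Longrightarrow> Rs p q"
  unfolding Rs_def Rw_def using W by blast

lemma FP_D: "FP h \<Longrightarrow> conf_owner (last h) = Duplicator \<Longrightarrow> FP (h @ [\<sigma> h]) \<and> game_move tr tau (Eset x y) (last h) (\<sigma> h)"
  using fp_ext[OF W] dup_next[OF W] by blast

lemma FP_S1: "FP h \<Longrightarrow> last h = Conf Spoiler pq (Some ca) m r \<Longrightarrow> FP (h @ [Conf Duplicator pq (Some ca) m Star])"
  by (cases pq) (auto intro!: fp_extS game_move.S1)

lemma respY:
  assumes fp: "FP h" and l: "last h = Conf Spoiler (u1,w) (Some(a,u')) (Some(v,Smile)) r"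
    and yb: "y = Bm \<Longrightarrow> u1 = u' \<and> w = v"
  shows "cy u' v"
proof (rule ccontr)
  assume nc: "\<not> cy u' v"
  define Q where "Q c \<longleftrightarrow> (\<exists>u1 w a u' v r. c = Conf Duplicator (u1,w) (Some(a,u')) (Some(v,Smile)) r \<and>
     (y=Bm \<longrightarrow> u1=u' \<and> w=v \<and> Rs u' v) \<and> \<not> cy u' v)" for c :: "('s,'a) conf"
  define P where "P h \<longleftrightarrow> FP h \<and> Q (last h)" for h
  have notP: "\<not> P h'" for h'
  proof (rule no_star_forever[OF W])
    fix h assume Ph: "P h"
    then have fp: "FP h" by (simp add: P_def)
    from Ph obtain u1 w a u' v r where l: "last h = Conf Duplicator (u1,w) (Some(a,u')) (Some(v,Smile)) r"
      and yb: "y=Bm \<longrightarrow> u1=u' \<and> w=v \<and> Rs u' v" and nc: "\<not> cy u' v"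
      unfolding P_def Q_def by blast
    have fp2: "FP (h @ [\<sigma> h])" and mv: "game_move tr tau (Eset x y) (last h) (\<sigma> h)"
      using FP_D[OF fp] l by auto
    note cases = mvD[OF mv[unfolded l]]
    show "FP h \<and> (\<exists>ext. ext \<noteq> [] \<and> (\<forall>c\<in>set ext. conf_reward c = Star) \<and> P (h @ ext))"
    proof -
      {
        assume "a = tau \<and> \<sigma> h = Conf Spoiler (u',v) None None Star"
        then have "Rs u' v" using goodRs[OF fp2] goodp_G0 by simp
        then have "cy u' v" unfolding cy_def using yb by (blast intro: gsteps_reflI)
        with nc have ?thesis by blast
      }
      moreover {
        fix v' assume A: "tr v tau v'" "\<sigma> h = Conf Spoiler (u1,v') (Some(a,u')) (Some(v',Smile)) Star"
        define c2 where "c2 = Conf Duplicator (u1,v') (Some(a,u')) (Some(v',Smile)) Star"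
        have fp3: "FP (h @ [\<sigma> h, c2])" using FP_S1[OF fp2] A(2) by (simp add: c2_def)
        have R2: "y = Bm \<Longrightarrow> Rs u' v'"
        proof -
          assume yB: "y = Bm"
          then have "u1 = u'" using yb by blast
          then have "goodp u' v' (last (h @ [\<sigma> h]))" using A(2) goodp_G2[OF yB] by simp
          then show ?thesis using goodRs[OF fp2] by blast
        qed
        have "\<not> cy u' v'" using cy_pre[OF A(1) _ ] nc yb by blast
        then have "Q c2" unfolding Q_def c2_def using yb R2 by blast
        then have "P (h @ [\<sigma> h, c2])" using fp3 by (simp add: P_def)
        then have ?thesis using fp A(2) by (auto simp: c2_def intro!: exI[of _ "[\<sigma> h, c2]"])
      }
      moreover {
        fix v' assume A: "tr v tau v'" "\<sigma> h = Conf Spoiler (u',v') None None Check"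
        have "Rs u' v'" using goodRs[OF fp2] A(2) goodp_G0 by simp
        then have "cy u' v" unfolding cy_def using yb A(1) by (blast intro: gsteps_I ts_one)
        with nc have ?thesis by blast
      }
      moreover {
        fix v' assume A: "tr v tau v'" "Smile \<in> Eset x y" "\<sigma> h = Conf Spoiler (u1,w) (Some(a,u')) (Some(v',Smile)) Star"
        define c2 where "c2 = Conf Duplicator (u1,w) (Some(a,u')) (Some(v',Smile)) Star"
        have yo: "y = Om" using A(2) by (simp add: Eset_Smile)
        have fp3: "FP (h @ [\<sigma> h, c2])" using FP_S1[OF fp2] A(3) by (simp add: c2_def)
        have "\<not> cy u' v'" using cy_pre[OF A(1) _ ] nc yo by blast
        then have "Q c2" unfolding Q_def c2_def using yo by blast
        then have "P (h @ [\<sigma> h, c2])" using fp3 by (simp add: P_def)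
        then have ?thesis using fp A(3) by (auto simp: c2_def intro!: exI[of _ "[\<sigma> h, c2]"])
      }
      ultimately show ?thesis using cases by blast
    qed
  qed
  define c2 where "c2 = Conf Duplicator (u1,w) (Some(a,u')) (Some(v,Smile)) Star"
  have fp2: "FP (h @ [c2])" using FP_S1[OF fp l] by (simp add: c2_def)
  have "y = Bm \<Longrightarrow> Rs u' v"
  proof -
    assume yB: "y = Bm"
    then have "u1 = u'" "w = v" using yb by blast+
    then have "goodp u' v (last h)" using l goodp_G2[OF yB] by simp
    then show ?thesis using goodRs[OF fp] by blast
  qed
  then have "Q c2" unfolding Q_def c2_def using yb nc by blast
  then have "P (h @ [c2])" using fp2 by (simp add: P_def)
  with notP show False by blast
qed

lemma respX:
  assumes fp: "FP h" and l: "last h = Conf Duplicator (u,w) (Some(a,u')) (Some(v,Frown)) r"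
    and tru: "tr u a u'" and xb: "x = Bm \<Longrightarrow> Rs u v"
  shows "cx u a u' v"
proof (rule ccontr)
  assume nc: "\<not> cx u a u' v"
  define Q where "Q c \<longleftrightarrow> (\<exists>u w a u' v r. c = Conf Duplicator (u,w) (Some(a,u')) (Some(v,Frown)) r \<and>
     tr u a u' \<and> (x=Bm \<longrightarrow> Rs u v) \<and> \<not> cx u a u' v)" for c :: "('s,'a) conf"
  define P where "P h \<longleftrightarrow> FP h \<and> Q (last h)" for h
  have notP: "\<not> P h'" for h'
  proof (rule no_star_forever[OF W])
    fix h assume Ph: "P h"
    then have fp: "FP h" by (simp add: P_def)
    from Ph obtain u w a u' v r where l: "last h = Conf Duplicator (u,w) (Some(a,u')) (Some(v,Frown)) r"
      and tru: "tr u a u'" and xb: "x=Bm \<longrightarrow> Rs u v" and nc: "\<not> cx u a u' v"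
      unfolding P_def Q_def by blast
    have fp2: "FP (h @ [\<sigma> h])" and mv: "game_move tr tau (Eset x y) (last h) (\<sigma> h)"
      using FP_D[OF fp] l by auto
    note cases = mvD[OF mv[unfolded l]]
    have gx: "gsteps tr tau x Rs u v v" using xb by (blast intro: gsteps_reflI)
    show "FP h \<and> (\<exists>ext. ext \<noteq> [] \<and> (\<forall>c\<in>set ext. conf_reward c = Star) \<and> P (h @ ext))"
    proof -
      {
        assume A: "a = tau \<and> \<sigma> h = Conf Spoiler (u',v) None None Star"
        then have "Rs u' v" using goodRs[OF fp2] goodp_G0 by simp
        then have "cx u a u' v" unfolding cx_def using A by blast
        with nc have ?thesis by blast
      }
      moreover {
        fix v' assume A: "tr v a v'" "\<sigma> h = Conf Spoiler (u',v') (Some(a,u')) (Some(v',Smile)) Star"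
        have "cy u' v'" by (rule respY[OF fp2]) (use A in auto)
        then obtain t' where "gsteps tr tau y Rs u' v' t'" "Rs u' t'" unfolding cy_def by blast
        then have "cx u a u' v" unfolding cx_def using gx A(1) by blast
        with nc have ?thesis by blast
      }
      moreover {
        fix v' assume A: "tr v a v'" "\<sigma> h = Conf Spoiler (u',v') None None Check"
        have "Rs u' v'" using goodRs[OF fp2] A(2) goodp_G0 by simp
        then have "gsteps tr tau y Rs u' v' v'" by (blast intro: gsteps_reflI)
        then have "cx u a u' v" unfolding cx_def using gx A(1) \<open>Rs u' v'\<close> by blast
        with nc have ?thesis by blast
      }
      moreover {
        fix v' assume A: "tr v a v'" "Smile \<in> Eset x y" "\<sigma> h = Conf Spoiler (u,w) (Some(a,u')) (Some(v',Smile)) Star"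
        have yo: "y = Om" using A(2) by (simp add: Eset_Smile)
        have "cy u' v'" by (rule respY[OF fp2]) (use A yo in auto)
        then obtain t' where "gsteps tr tau y Rs u' v' t'" "Rs u' t'" unfolding cy_def by blast
        then have "cx u a u' v" unfolding cx_def using gx A(1) by blast
        with nc have ?thesis by blast
      }
      moreover {
        fix v' assume A: "tr v tau v'" "\<sigma> h = Conf Spoiler (u,v') (Some(a,u')) (Some(v',Frown)) Star"
        define c2 where "c2 = Conf Duplicator (u,v') (Some(a,u')) (Some(v',Frown)) Star"
        have fp3: "FP (h @ [\<sigma> h, c2])" using FP_S1[OF fp2] A(2) by (simp add: c2_def)
        have R2: "Rs u v'"
        proof -
          have "goodp u v' (last (h @ [\<sigma> h]))" using A(2) goodp_G1[OF tru] by simp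
          then show ?thesis using goodRs[OF fp2] by blast
        qed
        have "\<not> cx u a u' v'" using cx_pre[OF A(1) _ ] nc xb by blast
        then have "Q c2" unfolding Q_def c2_def using tru R2 by blast
        then have "P (h @ [\<sigma> h, c2])" using fp3 by (simp add: P_def)
        then have ?thesis using fp A(2) by (auto simp: c2_def intro!: exI[of _ "[\<sigma> h, c2]"])
      }
      moreover {
        fix v' assume A: "tr v tau v'" "Frown \<in> Eset x y" "\<sigma> h = Conf Spoiler (u,w) (Some(a,u')) (Some(v',Frown)) Star"
        define c2 where "c2 = Conf Duplicator (u,w) (Some(a,u')) (Some(v',Frown)) Star"
        have xo: "x = Om" using A(2) by (simp add: Eset_Frown)
        have fp3: "FP (h @ [\<sigma> h, c2])" using FP_S1[OF fp2] A(3) by (simp add: c2_def)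
        have "\<not> cx u a u' v'" using cx_pre[OF A(1) _ ] nc xo by blast
        then have "Q c2" unfolding Q_def c2_def using tru xo by blast
        then have "P (h @ [\<sigma> h, c2])" using fp3 by (simp add: P_def)
        then have ?thesis using fp A(3) by (auto simp: c2_def intro!: exI[of _ "[\<sigma> h, c2]"])
      }
      ultimately show ?thesis using cases by blast
    qed
  qed
  have "Q (last h)" unfolding Q_def using l tru xb nc by blast
  then have "P h" using fp by (simp add: P_def)
  with notP show False by blast
qed

lemma exitY:
  assumes fp: "FP h" and l: "last h = Conf Spoiler (p,q) (Some(a,p)) (Some(q,Smile)) r" and yB: "y = Bm"
  shows "\<exists>h' q'' r'. FP h' \<and> last h' = Conf Spoiler (p,q'') None None r' \<and> tau_steps tr tau q q''"
proof (rule ccontr)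
  assume ng: "\<not> (\<exists>h' q'' r'. FP h' \<and> last h' = Conf Spoiler (p,q'') None None r' \<and> tau_steps tr tau q q'')"
  define Q where "Q c \<longleftrightarrow> (\<exists>w r. c = Conf Duplicator (p,w) (Some(a,p)) (Some(w,Smile)) r \<and> tau_steps tr tau q w)"
    for c :: "('s,'a) conf"
  define P where "P h \<longleftrightarrow> FP h \<and> Q (last h)" for h
  have notP: "\<not> P h'" for h'
  proof (rule no_star_forever[OF W])
    fix h assume Ph: "P h"
    then have fp: "FP h" by (simp add: P_def)
    from Ph obtain w r where l: "last h = Conf Duplicator (p,w) (Some(a,p)) (Some(w,Smile)) r"
      and qw: "tau_steps tr tau q w"
      unfolding P_def Q_def by blast
    have fp2: "FP (h @ [\<sigma> h])" and mv: "game_move tr tau (Eset x y) (last h) (\<sigma> h)"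
      using FP_D[OF fp] l by auto
    note cases = mvD[OF mv[unfolded l]]
    show "FP h \<and> (\<exists>ext. ext \<noteq> [] \<and> (\<forall>c\<in>set ext. conf_reward c = Star) \<and> P (h @ ext))"
    proof -
      {
        assume A: "a = tau \<and> \<sigma> h = Conf Spoiler (p,w) None None Star"
        then have "last (h @ [\<sigma> h]) = Conf Spoiler (p,w) None None Star" by simp
        then have False using ng fp2 qw by blast
      }
      moreover {
        fix v' assume A: "tr w tau v'" "\<sigma> h = Conf Spoiler (p,v') (Some(a,p)) (Some(v',Smile)) Star"
        define c2 where "c2 = Conf Duplicator (p,v') (Some(a,p)) (Some(v',Smile)) Star"
        have fp3: "FP (h @ [\<sigma> h, c2])" using FP_S1[OF fp2] A(2) by (simp add: c2_def)
        have "tau_steps tr tau q v'" using ts_trans[OF qw ts_one[of tr, OF A(1)]] .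
        then have "Q c2" unfolding Q_def c2_def by blast
        then have "P (h @ [\<sigma> h, c2])" using fp3 by (simp add: P_def)
        then have ?thesis using fp A(2) by (auto simp: c2_def intro!: exI[of _ "[\<sigma> h, c2]"])
      }
      moreover {
        fix v' assume A: "tr w tau v'" "\<sigma> h = Conf Spoiler (p,v') None None Check"
        have "tau_steps tr tau q v'" using ts_trans[OF qw ts_one[of tr, OF A(1)]] .
        moreover have "last (h @ [\<sigma> h]) = Conf Spoiler (p,v') None None Check" using A(2) by simp
        ultimately have False using ng fp2 by blast
      }
      moreover {
        fix v' assume A: "Smile \<in> Eset x y"
        then have False using yB by (simp add: Eset_Smile)
      }
      ultimately show ?thesis using cases by blast
    qed
  qed
  define c2 where "c2 = Conf Duplicator (p,q) (Some(a,p)) (Some(q,Smile)) Star"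
  have fp2: "FP (h @ [c2])" using FP_S1[OF fp l] by (simp add: c2_def)
  have "Q c2" unfolding Q_def c2_def by auto
  then have "P (h @ [c2])" using fp2 by (simp add: P_def)
  with notP show False by blast
qed

lemma divL:
  assumes fp: "FP h" and l: "last h = Conf Duplicator (f k, q) (Some(tau, f (Suc k))) (Some(q,Frown)) r"
    and path: "\<forall>i. tr (f i) tau (f (Suc i))"
  shows "\<exists>t' k'. tau_steps_plus tr tau q t' \<and> Rs (f k') t'"
proof (rule ccontr)
  assume ng: "\<not> (\<exists>t' k'. tau_steps_plus tr tau q t' \<and> Rs (f k') t')"
  define Q where "Q c \<longleftrightarrow> (\<exists>k r. c = Conf Duplicator (f k, q) (Some(tau, f (Suc k))) (Some(q,Frown)) r)"
    for c :: "('s,'a) conf"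
  define P where "P h \<longleftrightarrow> FP h \<and> Q (last h)" for h
  have notP: "\<not> P h'" for h'
  proof (rule no_star_forever[OF W])
    fix h assume Ph: "P h"
    then have fp: "FP h" by (simp add: P_def)
    from Ph obtain k r where l: "last h = Conf Duplicator (f k, q) (Some(tau, f (Suc k))) (Some(q,Frown)) r"
      unfolding P_def Q_def by blast
    have fp2: "FP (h @ [\<sigma> h])" and mv: "game_move tr tau (Eset x y) (last h) (\<sigma> h)"
      using FP_D[OF fp] l by auto
    note cases = mvD[OF mv[unfolded l]]
    show "FP h \<and> (\<exists>ext. ext \<noteq> [] \<and> (\<forall>c\<in>set ext. conf_reward c = Star) \<and> P (h @ ext))"
    proof -
      {
        assume A: "\<sigma> h = Conf Spoiler (f (Suc k), q) None None Star"
        define c3 where "c3 = Conf Duplicator (f (Suc k), q) (Some(tau, f (Suc (Suc k)))) (Some(q,Frown)) Star"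
        have "game_move tr tau (Eset x y) (last (h @ [\<sigma> h])) c3"
          unfolding c3_def using A path by (auto intro!: game_move.S2a)
        then have fp3: "FP (h @ [\<sigma> h, c3])" using fp_extS[OF fp2] A by simp
        have "Q c3" unfolding Q_def c3_def by blast
        then have "P (h @ [\<sigma> h, c3])" using fp3 by (simp add: P_def)
        then have ?thesis using fp A by (auto simp: c3_def intro!: exI[of _ "[\<sigma> h, c3]"])
      }
      moreover {
        fix v' assume A: "tr q tau v'" "\<sigma> h = Conf Spoiler (f (Suc k),v') (Some(tau,f (Suc k))) (Some(v',Smile)) Star"
        have "cy (f (Suc k)) v'" by (rule respY[OF fp2]) (use A in auto)
        then obtain t' where "gsteps tr tau y Rs (f (Suc k)) v' t'" "Rs (f (Suc k)) t'" unfolding cy_def by blast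
        then have False using ng tsp_I[of tr, OF A(1) gsteps_ts] by blast
      }
      moreover {
        fix v' assume A: "tr q tau v'" "\<sigma> h = Conf Spoiler (f (Suc k),v') None None Check"
        have "Rs (f (Suc k)) v'" using goodRs[OF fp2] A(2) goodp_G0 by simp
        then have False using ng tsp_I[of tr, OF A(1) ts_refl] by blast
      }
      moreover {
        fix v' assume A: "tr q tau v'" "Smile \<in> Eset x y" "\<sigma> h = Conf Spoiler (f k,q) (Some(tau,f (Suc k))) (Some(v',Smile)) Star"
        have yo: "y = Om" using A(2) by (simp add: Eset_Smile)
        have "cy (f (Suc k)) v'" by (rule respY[OF fp2]) (use A yo in auto)
        then obtain t' where "gsteps tr tau y Rs (f (Suc k)) v' t'" "Rs (f (Suc k)) t'" unfolding cy_def by blast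
        then have False using ng tsp_I[of tr, OF A(1) gsteps_ts] by blast
      }
      moreover {
        fix v' assume A: "tr q tau v'" "\<sigma> h = Conf Spoiler (f k,v') (Some(tau,f (Suc k))) (Some(v',Frown)) Star"
        define c2 where "c2 = Conf Duplicator (f k,v') (Some(tau,f (Suc k))) (Some(v',Frown)) Star"
        have fp3: "FP (h @ [\<sigma> h, c2])" using FP_S1[OF fp2] A(2) by (simp add: c2_def)
        have R2: "Rs (f k) v'"
        proof -
          have "goodp (f k) v' (last (h @ [\<sigma> h]))" using A(2) goodp_G1[OF path[rule_format, of k]] by simp
          then show ?thesis using goodRs[OF fp2] by blast
        qed
        have "cx (f k) tau (f (Suc k)) v'"
          by (rule respX[OF fp3]) (use R2 path c2_def in auto)
        then have False unfolding cx_def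
        proof (elim disjE exE conjE)
          assume "Rs (f (Suc k)) v'" then show False using ng tsp_I[of tr, OF A(1) ts_refl] by blast
        next
          fix t1 t2 t' assume g: "gsteps tr tau x Rs (f k) v' t1" "tr t1 tau t2"
            "gsteps tr tau y Rs (f (Suc k)) t2 t'" "Rs (f (Suc k)) t'"
          have "tau_steps tr tau v' t'" using ts_trans[OF gsteps_ts[OF g(1)] ts_step[of tr, OF g(2) gsteps_ts[OF g(3)]]] .
          then show False using ng tsp_I[of tr, OF A(1)] g(4) by blast
        qed
      }
      moreover {
        fix v' assume A: "tr q tau v'" "Frown \<in> Eset x y" "\<sigma> h = Conf Spoiler (f k,q) (Some(tau,f (Suc k))) (Some(v',Frown)) Star"
        define c2 where "c2 = Conf Duplicator (f k,q) (Some(tau,f (Suc k))) (Some(v',Frown)) Star"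
        have xo: "x = Om" using A(2) by (simp add: Eset_Frown)
        have fp3: "FP (h @ [\<sigma> h, c2])" using FP_S1[OF fp2] A(3) by (simp add: c2_def)
        have "cx (f k) tau (f (Suc k)) v'"
          by (rule respX[OF fp3]) (use xo path c2_def in auto)
        then have False unfolding cx_def
        proof (elim disjE exE conjE)
          assume "Rs (f (Suc k)) v'" then show False using ng tsp_I[of tr, OF A(1) ts_refl] by blast
        next
          fix t1 t2 t' assume g: "gsteps tr tau x Rs (f k) v' t1" "tr t1 tau t2"
            "gsteps tr tau y Rs (f (Suc k)) t2 t'" "Rs (f (Suc k)) t'"
          have "tau_steps tr tau v' t'" using ts_trans[OF gsteps_ts[OF g(1)] ts_step[of tr, OF g(2) gsteps_ts[OF g(3)]]] .
          then show False using ng tsp_I[of tr, OF A(1)] g(4) by blast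
        qed
      }
      ultimately show ?thesis using cases by blast
    qed
  qed
  have "Q (last h)" unfolding Q_def using l by blast
  then have "P h" using fp by (simp add: P_def)
  with notP show False by blast
qed


end

lemma chal:
  assumes fp: "finite_play tr tau E \<sigma> c0 h" and l: "last h = Conf Spoiler (p,q) cc m r"
    and st: "tr p a p'" and cm: "cc = Some(a,p') \<Longrightarrow> m = Some(q,Frown)"
  shows "\<exists>r'. finite_play tr tau E \<sigma> c0 (h @ [Conf Duplicator (p,q) (Some(a,p')) (Some(q,Frown)) r'])"
proof (cases "cc = Some(a,p')")
  case True
  then have "game_move tr tau E (last h) (Conf Duplicator (p,q) (Some(a,p')) (Some(q,Frown)) Star)"
    using l cm by (auto intro: game_move.S1)
  then show ?thesis using fp_extS[OF fp] l by auto
next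
  case False
  then have "game_move tr tau E (last h) (Conf Duplicator (p,q) (Some(a,p')) (Some(q,Frown)) Check)"
    using l st by (auto intro: game_move.S2b)
  then show ?thesis using fp_extS[OF fp] l by auto
qed

lemma fp_single: "finite_play tr tau E \<sigma> c0 [c0]"
  by (simp add: finite_play_def)

lemma S3_ext:
  assumes fp: "finite_play tr tau E \<sigma> c0 h" and l: "last h = Conf Spoiler (q,p) cc m r" and st: "tr p a p'"
  shows "finite_play tr tau E \<sigma> c0 (h @ [Conf Duplicator (p,q) (Some(a,p')) (Some(q,Frown)) Check])"
proof -
  have "game_move tr tau E (last h) (Conf Duplicator (p,q) (Some(a,p')) (Some(q,Frown)) Check)"
    using l st by (auto intro: game_move.S3)
  then show ?thesis using fp_extS[OF fp] l by auto
qed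

lemma goodp_shape: "goodp p q c \<Longrightarrow> \<exists>cc m r. c = Conf Spoiler (p,q) cc m r"
  unfolding goodp_def by blast

lemma Rs_transfer:
  assumes R: "Rs p q" and st: "tr p a p'"
  shows "cx p a p' q"
  using R unfolding Rs_def
proof (elim disjE)
  assume "Rw q p"
  then obtain s0 t0 \<sigma> h where W: "dup_wins tr tau (Eset x y) \<sigma> (Conf Spoiler (s0,t0) None None Star)"
    and fp: "finite_play tr tau (Eset x y) \<sigma> (Conf Spoiler (s0,t0) None None Star) h" and g: "goodp q p (last h)"
    unfolding Rw_def by blast
  obtain cc m r where l: "last h = Conf Spoiler (q,p) cc m r" using goodp_shape[OF g] by blast
  show ?thesis
    by (rule respX[OF W S3_ext[OF fp l st]]) (use st R in auto)
next
  assume "Rw p q"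
  then obtain s0 t0 \<sigma> h where W: "dup_wins tr tau (Eset x y) \<sigma> (Conf Spoiler (s0,t0) None None Star)"
    and fp: "finite_play tr tau (Eset x y) \<sigma> (Conf Spoiler (s0,t0) None None Star) h" and g: "goodp p q (last h)"
    unfolding Rw_def by blast
  obtain cc m r where l: "last h = Conf Spoiler (p,q) cc m r" using goodp_shape[OF g] by blast
  show ?thesis
  proof (cases "cc = Some(a,p') \<longrightarrow> m = Some(q,Frown)")
    case True
    then obtain r' where fp2: "finite_play tr tau (Eset x y) \<sigma> (Conf Spoiler (s0,t0) None None Star)
        (h @ [Conf Duplicator (p,q) (Some(a,p')) (Some(q,Frown)) r'])"
      using chal[OF fp l st] by blast
    show ?thesis by (rule respX[OF W fp2]) (use st R in auto)
  next
    case False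
    then have cc: "cc = Some(a,p')" and mm: "m \<noteq> Some(q,Frown)" by auto
    from g l cc mm have yB: "y = Bm" and pp: "p' = p" and mS: "m = Some(q,Smile)"
      unfolding goodp_def by auto
    show ?thesis
    proof (cases "a = tau")
      case True
      then show ?thesis unfolding cx_def using R pp by blast
    next
      case False
      have l2: "last h = Conf Spoiler (p,q) (Some(a,p)) (Some(q,Smile)) r" using l cc pp mS by simp
      obtain h' q'' r' where fp': "finite_play tr tau (Eset x y) \<sigma> (Conf Spoiler (s0,t0) None None Star) h'"
        and l': "last h' = Conf Spoiler (p,q'') None None r'" and qq: "tau_steps tr tau q q''"
        using exitY[OF W fp l2 yB] by blast
      have Rq: "Rs p q''" using goodRs[OF W fp'] l' goodp_G0 by simp
      obtain r2 where fp2: "finite_play tr tau (Eset x y) \<sigma> (Conf Spoiler (s0,t0) None None Star)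
        (h' @ [Conf Duplicator (p,q'') (Some(a,p')) (Some(q'',Frown)) r2])"
        using chal[OF fp' l' st] by blast
      have "cx p a p' q''" by (rule respX[OF W fp2]) (use st Rq in auto)
      then obtain t1 t2 t' where gg: "gsteps tr tau x Rs p q'' t1" "tr t1 a t2"
        "gsteps tr tau y Rs p' t2 t'" "Rs p' t'"
        unfolding cx_def using False by blast
      have "gsteps tr tau x Rs p q t1"
        using gsteps_I[OF ts_trans[OF qq gsteps_ts[OF gg(1)]]] R gsteps_RB[OF gg(1)] by blast
      then show ?thesis unfolding cx_def using gg by blast
    qed
  qed
qed

lemma Rs_div:
  assumes R: "Rs p q" and f0: "f 0 = p" and path: "\<forall>i. tr (f i) tau (f (Suc i))"
  shows "\<exists>t' k. tau_steps_plus tr tau q t' \<and> Rs (f k) t'"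
  using R[unfolded Rs_def]
proof (elim disjE)
  assume "Rw q p"
  then obtain s0 t0 \<sigma> h where W: "dup_wins tr tau (Eset x y) \<sigma> (Conf Spoiler (s0,t0) None None Star)"
    and fp: "finite_play tr tau (Eset x y) \<sigma> (Conf Spoiler (s0,t0) None None Star) h" and g: "goodp q p (last h)"
    unfolding Rw_def by blast
  obtain cc m r where l: "last h = Conf Spoiler (q,p) cc m r" using goodp_shape[OF g] by blast
  have st: "tr p tau (f (Suc 0))" using path f0 by metis
  show ?thesis
    by (rule divL[OF W S3_ext[OF fp l st], of f 0]) (use f0 path in auto)
next
  assume "Rw p q"
  then obtain s0 t0 \<sigma> h where W: "dup_wins tr tau (Eset x y) \<sigma> (Conf Spoiler (s0,t0) None None Star)"
    and fp: "finite_play tr tau (Eset x y) \<sigma> (Conf Spoiler (s0,t0) None None Star) h" and g: "goodp p q (last h)"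
    unfolding Rw_def by blast
  obtain cc m r where l: "last h = Conf Spoiler (p,q) cc m r" using goodp_shape[OF g] by blast
  have st: "tr p tau (f (Suc 0))" using path f0 by metis
  show ?thesis
  proof (cases "cc = Some(tau,f (Suc 0)) \<longrightarrow> m = Some(q,Frown)")
    case True
    then obtain r' where fp2: "finite_play tr tau (Eset x y) \<sigma> (Conf Spoiler (s0,t0) None None Star)
        (h @ [Conf Duplicator (p,q) (Some(tau,f (Suc 0))) (Some(q,Frown)) r'])"
      using chal[OF fp l st] by blast
    show ?thesis by (rule divL[OF W fp2, of f 0]) (use f0 path in auto)
  next
    case False
    then have cc: "cc = Some(tau,f (Suc 0))" and mm: "m \<noteq> Some(q,Frown)" by auto
    from g l cc mm have yB: "y = Bm" and pp: "f (Suc 0) = p" and mS: "m = Some(q,Smile)"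
      unfolding goodp_def by auto
    define c2 where "c2 = Conf Duplicator (p,q) (Some(tau,p)) (Some(q,Smile)) Star"
    have l2: "last h = Conf Spoiler (p,q) (Some(tau,p)) (Some(q,Smile)) r" using l cc pp mS by simp
    have fp2: "finite_play tr tau (Eset x y) \<sigma> (Conf Spoiler (s0,t0) None None Star) (h @ [c2])"
      using FP_S1[OF W fp l2] by (simp add: c2_def)
    have fp3: "finite_play tr tau (Eset x y) \<sigma> (Conf Spoiler (s0,t0) None None Star) (h @ [c2] @ [\<sigma> (h @ [c2])])"
      and mv: "game_move tr tau (Eset x y) c2 (\<sigma> (h @ [c2]))"
      using FP_D[OF W fp2] by (auto simp: c2_def)
    note cases = mvD[OF mv[unfolded c2_def], folded c2_def]
    {
      assume A: "\<sigma> (h @ [c2]) = Conf Spoiler (p,q) None None Star"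
      obtain r' where fp4: "finite_play tr tau (Eset x y) \<sigma> (Conf Spoiler (s0,t0) None None Star)
        ((h @ [c2] @ [\<sigma> (h @ [c2])]) @ [Conf Duplicator (p,q) (Some(tau,f (Suc 0))) (Some(q,Frown)) r'])"
        using chal[OF fp3 _ st] A by fastforce
      have ?thesis by (rule divL[OF W fp4, of f 0]) (use f0 path in auto)
    }
    moreover {
      fix v' assume A: "tr q tau v'" "\<sigma> (h @ [c2]) = Conf Spoiler (p,v') (Some(tau,p)) (Some(v',Smile)) Star"
      have "goodp p v' (last (h @ [c2] @ [\<sigma> (h @ [c2])]))" using A(2) goodp_G2[OF yB] by simp
      then have "Rs p v'" using goodRs[OF W fp3] by blast
      then have ?thesis using tsp_I[of tr, OF A(1) ts_refl] f0 by metis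
    }
    moreover {
      fix v' assume A: "tr q tau v'" "\<sigma> (h @ [c2]) = Conf Spoiler (p,v') None None Check"
      have "goodp p v' (last (h @ [c2] @ [\<sigma> (h @ [c2])]))" using A(2) goodp_G0 by simp
      then have "Rs p v'" using goodRs[OF W fp3] by blast
      then have ?thesis using tsp_I[of tr, OF A(1) ts_refl] f0 by metis
    }
    moreover {
      assume "Smile \<in> Eset x y"
      then have False using yB by (simp add: Eset_Smile)
    }
    ultimately show ?thesis using cases by blast
  qed
qed

lemma Rs_bisim: "generic_bisim_ed tr tau x y Rs"
  unfolding generic_bisim_ed_def generic_bisim_def
proof (intro conjI allI impI)
  show "symp Rs" by (auto simp: symp_def Rs_def)
next
  fix s t a s' assume "Rs s t \<and> tr s a s'"
  then have "cx s a s' t" using Rs_transfer by blast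
  then show "a = tau \<and> Rs s' t \<or>
     (\<exists>t' t1 t2. gsteps tr tau x Rs s t t1 \<and> tr t1 a t2 \<and> gsteps tr tau y Rs s' t2 t' \<and> Rs s' t')"
    unfolding cx_def by blast
next
  fix s t f assume "Rs s t" "f 0 = s \<and> (\<forall>i. tr (f i) tau (f (Suc i)))"
  then show "\<exists>t' k. tau_steps_plus tr tau t t' \<and> Rs (f k) t'" using Rs_div by blast
qed

lemma game_to_bisim: "game_equiv tr tau (Eset x y) s t \<Longrightarrow> bisimilar_ed tr tau x y s t"
proof -
  assume "game_equiv tr tau (Eset x y) s t"
  then obtain \<sigma> where W: "dup_wins tr tau (Eset x y) \<sigma> (Conf Spoiler (s,t) None None Star)"
    unfolding game_equiv_def by blast
  have "Rs s t" using goodRs[OF W fp_single] goodp_G0 by simp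
  then show ?thesis unfolding bisimilar_ed_def using Rs_bisim by blast
qed

end



lemma tranclp_last: "r\<^sup>+\<^sup>+ a b \<Longrightarrow> \<exists>c. r\<^sup>*\<^sup>* a c \<and> r c b"
  by (induction rule: tranclp_induct) (auto intro: tranclp_into_rtranclp)

context
  fixes tr :: "'s \<Rightarrow> 'a \<Rightarrow> 's \<Rightarrow> bool" and tau :: 'a and x y :: mode
begin

definition sbb :: "('s \<Rightarrow> 's \<Rightarrow> bool) \<Rightarrow> bool" where
  "sbb R \<longleftrightarrow> symp R \<and>
     (\<forall>s t a s'. R s t \<and> tr s a s' \<longrightarrow>
        (a = tau \<and> (\<exists>t'. tau_steps tr tau t t' \<and> R s t' \<and> R s' t')) \<or>
        (\<exists>t' t1 t2. gsteps tr tau x R s t t1 \<and> tr t1 a t2 \<and>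
                     gsteps tr tau y R s' t2 t' \<and> R s' t')) \<and>
     (\<forall>s t. R s t \<longrightarrow>
        (\<forall>f. f 0 = s \<and> (\<forall>i. tr (f i) tau (f (Suc i))) \<longrightarrow>
           (\<exists>t' k. tau_steps_plus tr tau t t' \<and> R (f k) t')))"

definition sbl :: "'s \<Rightarrow> 's \<Rightarrow> bool" where
  "sbl s t \<longleftrightarrow> (\<exists>R. sbb R \<and> R s t)"

lemma ed_sbb: "generic_bisim_ed tr tau x y R \<Longrightarrow> sbb R"
  unfolding generic_bisim_ed_def generic_bisim_def sbb_def
proof (intro conjI allI impI)
  assume A: "(symp R \<and>
     (\<forall>s t a s'. R s t \<and> tr s a s' \<longrightarrow>
        (a = tau \<and> R s' t) \<or>
        (\<exists>t' t1 t2. gsteps tr tau x R s t t1 \<and> tr t1 a t2 \<and>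
                     gsteps tr tau y R s' t2 t' \<and> R s' t'))) \<and>
     (\<forall>s t. R s t \<longrightarrow>
        (\<forall>f. f 0 = s \<and> (\<forall>i. tr (f i) tau (f (Suc i))) \<longrightarrow>
           (\<exists>t' k. tau_steps_plus tr tau t t' \<and> R (f k) t')))"
  then show "symp R" by blast
  fix s t a s' assume B: "R s t \<and> tr s a s'"
  then show "(a = tau \<and> (\<exists>t'. tau_steps tr tau t t' \<and> R s t' \<and> R s' t')) \<or>
        (\<exists>t' t1 t2. gsteps tr tau x R s t t1 \<and> tr t1 a t2 \<and>
                     gsteps tr tau y R s' t2 t' \<and> R s' t')"
    using A ts_refl by metis
next
  fix s t f
  assume "(symp R \<and>
     (\<forall>s t a s'. R s t \<and> tr s a s' \<longrightarrow>
        (a = tau \<and> R s' t) \<or>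
        (\<exists>t' t1 t2. gsteps tr tau x R s t t1 \<and> tr t1 a t2 \<and>
                     gsteps tr tau y R s' t2 t' \<and> R s' t'))) \<and>
     (\<forall>s t. R s t \<longrightarrow>
        (\<forall>f. f 0 = s \<and> (\<forall>i. tr (f i) tau (f (Suc i))) \<longrightarrow>
           (\<exists>t' k. tau_steps_plus tr tau t t' \<and> R (f k) t')))"
    "R s t" "f 0 = s \<and> (\<forall>i. tr (f i) tau (f (Suc i)))"
  then show "\<exists>t' k. tau_steps_plus tr tau t t' \<and> R (f k) t'" by blast
qed

lemma sbb_mono_clause:
  assumes le: "\<And>u v. R u v \<Longrightarrow> R' u v"
    and c: "(a = tau \<and> (\<exists>t'. tau_steps tr tau t t' \<and> R s t' \<and> R s' t')) \<or>
        (\<exists>t' t1 t2. gsteps tr tau x R s t t1 \<and> tr t1 a t2 \<and>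
                     gsteps tr tau y R s' t2 t' \<and> R s' t')"
  shows "(a = tau \<and> (\<exists>t'. tau_steps tr tau t t' \<and> R' s t' \<and> R' s' t')) \<or>
        (\<exists>t' t1 t2. gsteps tr tau x R' s t t1 \<and> tr t1 a t2 \<and>
                     gsteps tr tau y R' s' t2 t' \<and> R' s' t')"
  using c
proof (elim disjE exE conjE)
  fix t' assume "a = tau" "tau_steps tr tau t t'" "R s t'" "R s' t'"
  then show ?thesis using le by blast
next
  fix t' t1 t2 assume g: "gsteps tr tau x R s t t1" "tr t1 a t2" "gsteps tr tau y R s' t2 t'" "R s' t'"
  have "gsteps tr tau x R' s t t1" by (rule gsteps_mono[OF g(1) le])
  moreover have "gsteps tr tau y R' s' t2 t'" by (rule gsteps_mono[OF g(3) le])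
  ultimately show ?thesis using g le by blast
qed

lemma sbb_symp: "sbb R \<Longrightarrow> symp R" by (simp add: sbb_def)

lemma sbb_clause: "sbb R \<Longrightarrow> R s t \<Longrightarrow> tr s a s' \<Longrightarrow>
   (a = tau \<and> (\<exists>t'. tau_steps tr tau t t' \<and> R s t' \<and> R s' t')) \<or>
        (\<exists>t' t1 t2. gsteps tr tau x R s t t1 \<and> tr t1 a t2 \<and>
                     gsteps tr tau y R s' t2 t' \<and> R s' t')"
proof -
  assume "sbb R" "R s t" "tr s a s'"
  moreover have "\<forall>s t a s'. R s t \<and> tr s a s' \<longrightarrow>
        (a = tau \<and> (\<exists>t'. tau_steps tr tau t t' \<and> R s t' \<and> R s' t')) \<or>
        (\<exists>t' t1 t2. gsteps tr tau x R s t t1 \<and> tr t1 a t2 \<and>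
                     gsteps tr tau y R s' t2 t' \<and> R s' t')" using \<open>sbb R\<close> by (simp add: sbb_def)
  ultimately show ?thesis by blast
qed

lemma sbb_div: "sbb R \<Longrightarrow> R s t \<Longrightarrow> f 0 = s \<Longrightarrow> (\<forall>i. tr (f i) tau (f (Suc i))) \<Longrightarrow>
   \<exists>t' k. tau_steps_plus tr tau t t' \<and> R (f k) t'"
proof -
  assume "sbb R" "R s t" "f 0 = s" "\<forall>i. tr (f i) tau (f (Suc i))"
  moreover have "\<forall>s t. R s t \<longrightarrow>
        (\<forall>f. f 0 = s \<and> (\<forall>i. tr (f i) tau (f (Suc i))) \<longrightarrow>
           (\<exists>t' k. tau_steps_plus tr tau t t' \<and> R (f k) t'))" using \<open>sbb R\<close> by (simp add: sbb_def)
  ultimately show ?thesis by blast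
qed

lemma sbbI:
  assumes "symp R"
    and "\<And>s t a s'. R s t \<Longrightarrow> tr s a s' \<Longrightarrow>
        (a = tau \<and> (\<exists>t'. tau_steps tr tau t t' \<and> R s t' \<and> R s' t')) \<or>
        (\<exists>t' t1 t2. gsteps tr tau x R s t t1 \<and> tr t1 a t2 \<and>
                     gsteps tr tau y R s' t2 t' \<and> R s' t')"
    and "\<And>s t f. R s t \<Longrightarrow> f 0 = s \<Longrightarrow> (\<forall>i. tr (f i) tau (f (Suc i))) \<Longrightarrow>
           (\<exists>t' k. tau_steps_plus tr tau t t' \<and> R (f k) t')"
  shows "sbb R"
  unfolding sbb_def using assms by blast

lemma sbb_sbl: "sbb sbl"
proof (rule sbbI)
  show "symp sbl" unfolding symp_def sbl_def using sbb_symp by (metis sympD)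
next
  fix s t a s' assume "sbl s t" "tr s a s'"
  then obtain R where R: "sbb R" "R s t" unfolding sbl_def by blast
  have le: "R u v \<Longrightarrow> sbl u v" for u v using R(1) unfolding sbl_def by blast
  show "(a = tau \<and> (\<exists>t'. tau_steps tr tau t t' \<and> sbl s t' \<and> sbl s' t')) \<or>
        (\<exists>t' t1 t2. gsteps tr tau x sbl s t t1 \<and> tr t1 a t2 \<and>
                     gsteps tr tau y sbl s' t2 t' \<and> sbl s' t')"
    by (rule sbb_mono_clause[OF le sbb_clause[OF R \<open>tr s a s'\<close>]])
next
  fix s t f assume "sbl s t" "f 0 = s" "\<forall>i. tr (f i) tau (f (Suc i))"
  then obtain R where R: "sbb R" "R s t" unfolding sbl_def by blast
  have le: "R u v \<Longrightarrow> sbl u v" for u v using R(1) unfolding sbl_def by blast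
  show "\<exists>t' k. tau_steps_plus tr tau t t' \<and> sbl (f k) t'"
    using sbb_div[OF R \<open>f 0 = s\<close> \<open>\<forall>i. _\<close>] le by blast
qed

lemma sbl_sym: "sbl s t \<Longrightarrow> sbl t s"
  using sbb_symp[OF sbb_sbl] by (metis sympD)

lemma sbl_clause: "sbl s t \<Longrightarrow> tr s a s' \<Longrightarrow>
   (a = tau \<and> (\<exists>t'. tau_steps tr tau t t' \<and> sbl s t' \<and> sbl s' t')) \<or>
        (\<exists>t' t1 t2. gsteps tr tau x sbl s t t1 \<and> tr t1 a t2 \<and>
                     gsteps tr tau y sbl s' t2 t' \<and> sbl s' t')"
  by (rule sbb_clause[OF sbb_sbl])

lemma sbl_div: "sbl s t \<Longrightarrow> f 0 = s \<Longrightarrow> (\<forall>i. tr (f i) tau (f (Suc i))) \<Longrightarrow>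
   \<exists>t' k. tau_steps_plus tr tau t t' \<and> sbl (f k) t'"
  by (rule sbb_div[OF sbb_sbl])

lemma sbb_le: "sbb R \<Longrightarrow> R s t \<Longrightarrow> sbl s t"
  unfolding sbl_def by blast

lemma PT: "tau_steps tr tau q w \<Longrightarrow> sbl q s \<Longrightarrow> \<exists>sw. tau_steps tr tau s sw \<and> sbl w sw"
  unfolding tau_steps_def
proof (induction rule: rtranclp_induct)
  case base then show ?case by auto
next
  case (step m m')
  then obtain sm where sm: "(\<lambda>s t. tr s tau t)\<^sup>*\<^sup>* s sm" "sbl m sm" by blast
  from sbl_clause[OF sm(2) step(2)] show ?case
  proof (elim disjE exE conjE)
    fix t' assume "tau_steps tr tau sm t'" "sbl m' t'"
    then show ?case using sm(1) unfolding tau_steps_def by (meson rtranclp_trans)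
  next
    fix t' t1 t2 assume g: "gsteps tr tau x sbl m sm t1" "tr t1 tau t2" "gsteps tr tau y sbl m' t2 t'" "sbl m' t'"
    have "tau_steps tr tau sm t'" using ts_trans[OF gsteps_ts[OF g(1)] ts_step[of tr, OF g(2) gsteps_ts[OF g(3)]]] .
    then show ?case using sm(1) g(4) unfolding tau_steps_def by (meson rtranclp_trans)
  qed
qed

lemma ST:
  assumes "sbl s q" "tau_steps tr tau q w" "tau_steps tr tau w q1" "sbl s q1"
  shows "sbl s w"
proof -
  define P where "P a b \<longleftrightarrow> (\<exists>q q1. sbl a q \<and> tau_steps tr tau q b \<and> tau_steps tr tau b q1 \<and> sbl a q1)" for a b
  define R' where "R' a b \<longleftrightarrow> P a b \<or> P b a" for a b
  have sblP: "sbl a b \<Longrightarrow> R' a b" for a b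
    unfolding R'_def P_def by (intro disjI1 exI[of _ b] conjI) simp_all
  have sbbR: "sbb R'"
  proof (rule sbbI)
    show "symp R'" unfolding symp_def R'_def by blast
  next
    fix s t a s' assume A1: "R' s t" and A2: "tr s a s'"
    have A: "R' s t \<and> tr s a s'" using A1 A2 by blast
    show "(a = tau \<and> (\<exists>t'. tau_steps tr tau t t' \<and> R' s t' \<and> R' s' t')) \<or>
        (\<exists>t' t1 t2. gsteps tr tau x R' s t t1 \<and> tr t1 a t2 \<and>
                     gsteps tr tau y R' s' t2 t' \<and> R' s' t')"
    proof -
      obtain tt where tt: "tau_steps tr tau t tt" "sbl s tt" and Rst: "R' s t"
      proof (cases "P s t")
        case True
        then obtain q q1 where "tau_steps tr tau t q1" "sbl s q1" unfolding P_def by blast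
        then show ?thesis using that A by blast
      next
        case False
        then have "P t s" using A unfolding R'_def by blast
        then obtain q where q: "sbl t q" "tau_steps tr tau q s" unfolding P_def by blast
        obtain sw where "tau_steps tr tau t sw" "sbl s sw" using PT[OF q(2) sbl_sym[OF q(1)]] by blast
        then show ?thesis using that A by blast
      qed
      from sbl_clause[OF tt(2) conjunct2[OF A]] show ?thesis
      proof (elim disjE exE conjE)
        fix t' assume "a = tau" "tau_steps tr tau tt t'" "sbl s t'" "sbl s' t'"
        then show ?thesis using ts_trans[OF tt(1)] sblP by blast
      next
        fix t' t1 t2 assume g: "gsteps tr tau x sbl s tt t1" "tr t1 a t2" "gsteps tr tau y sbl s' t2 t'" "sbl s' t'"
        have "gsteps tr tau x R' s t t1"
        proof (rule gsteps_I)
          show "tau_steps tr tau t t1" using ts_trans[OF tt(1) gsteps_ts[OF g(1)]] .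
          show "R' s t \<and> R' s t1" if "x = Bm" using Rst sblP gsteps_RB[OF g(1) that] by blast
        qed
        moreover have "gsteps tr tau y R' s' t2 t'" using gsteps_mono[OF g(3) sblP] .
        ultimately show ?thesis using g sblP by blast
      qed
    qed
  next
    fix s t f assume A1: "R' s t" "f 0 = s" "\<forall>i. tr (f i) tau (f (Suc i))"
    have A: "R' s t" "f 0 = s \<and> (\<forall>i. tr (f i) tau (f (Suc i)))" using A1 by blast+
    show "\<exists>t' k. tau_steps_plus tr tau t t' \<and> R' (f k) t'"
    proof (cases "P s t")
      case True
      then obtain q1 where q1: "tau_steps tr tau t q1" "sbl s q1" unfolding P_def by blast
      obtain t' k where "tau_steps_plus tr tau q1 t'" "sbl (f k) t'" using sbl_div[OF q1(2)] A(2) by blast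
      moreover have "tau_steps_plus tr tau t t'" using q1(1) calculation(1)
        unfolding tau_steps_def tau_steps_plus_def by (rule rtranclp_tranclp_tranclp)
      ultimately show ?thesis using sblP by blast
    next
      case False
      then have "P t s" using A unfolding R'_def by blast
      then obtain q where q: "sbl t q" "tau_steps tr tau q s" unfolding P_def by blast
      obtain sw where sw: "tau_steps tr tau t sw" "sbl s sw" using PT[OF q(2) sbl_sym[OF q(1)]] by blast
      show ?thesis
      proof (cases "t = sw")
        case True
        then obtain t' k where "tau_steps_plus tr tau t t'" "sbl (f k) t'" using sbl_div[OF sw(2)] A(2) by blast
        then show ?thesis using sblP by blast
      next
        case False
        then have "tau_steps_plus tr tau t sw" using tsp_ne[OF sw(1)] by blast
        moreover have "R' (f 0) sw" using sblP sw(2) A(2) by simp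
        ultimately show ?thesis by blast
      qed
    qed
  qed
  have "P s w" unfolding P_def using assms by blast
  then show ?thesis using sbb_le[OF sbbR] unfolding R'_def by blast
qed

lemma rp_ts: "((\<lambda>p q. tr p tau q) ^^ n) a b \<Longrightarrow> tau_steps tr tau a b"
  unfolding tau_steps_def by (rule relpowp_imp_rtranclp)

lemma ts_rp: "tau_steps tr tau a b \<Longrightarrow> \<exists>n. ((\<lambda>p q. tr p tau q) ^^ n) a b"
  unfolding tau_steps_def by (rule rtranclp_imp_relpowp)

definition XP :: "'s \<Rightarrow> 'a \<Rightarrow> 's \<Rightarrow> 's \<Rightarrow> nat \<Rightarrow> bool" where
  "XP u a u' v n \<longleftrightarrow> (\<exists>i j t1 t2 t'. n = i + j \<and> ((\<lambda>p q. tr p tau q) ^^ i) v t1 \<and> tr t1 a t2 \<and>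
     ((\<lambda>p q. tr p tau q) ^^ j) t2 t' \<and> (x = Bm \<longrightarrow> sbl u v \<and> sbl u t1) \<and> (y = Bm \<longrightarrow> sbl u' t2) \<and> sbl u' t')"

definition YP :: "'s \<Rightarrow> 's \<Rightarrow> nat \<Rightarrow> bool" where
  "YP u' v n \<longleftrightarrow> 0 < n \<and> (\<exists>t'. ((\<lambda>p q. tr p tau q) ^^ n) v t' \<and> sbl u' t') \<and> (y = Bm \<longrightarrow> sbl u' v)"

definition XOK :: "'s \<Rightarrow> 'a \<Rightarrow> 's \<Rightarrow> 's \<Rightarrow> bool" where
  "XOK u a u' v \<longleftrightarrow> (a = tau \<and> sbl u' v) \<or> (\<exists>n. XP u a u' v n)"

definition xm :: "'s \<Rightarrow> 'a \<Rightarrow> 's \<Rightarrow> 's \<Rightarrow> nat" where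
  "xm u a u' v = (LEAST n. XP u a u' v n)"

definition ym :: "'s \<Rightarrow> 's \<Rightarrow> nat" where
  "ym u' v = (LEAST n. YP u' v n)"

definition Inv :: "('s,'a) conf \<Rightarrow> bool" where
  "Inv c \<longleftrightarrow> (\<exists>p q r. c = Conf Spoiler (p,q) None None r \<and> sbl p q) \<or>
    (\<exists>ow p q a u' v r. c = Conf ow (p,q) (Some(a,u')) (Some(v,Frown)) r \<and> tr p a u' \<and> sbl p q \<and>
        (x = Bm \<longrightarrow> v = q) \<and> XOK p a u' v) \<or>
    (\<exists>ow p q a u' v r. c = Conf ow (p,q) (Some(a,u')) (Some(v,Smile)) r \<and> sbl p q \<and>
        (y = Bm \<longrightarrow> p = u' \<and> v = q) \<and> (\<exists>n. YP u' v n))"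

definition XProg :: "'s \<Rightarrow> 'a \<Rightarrow> 's \<Rightarrow> 's \<Rightarrow> ('s,'a) conf \<Rightarrow> bool" where
  "XProg p a u' v c' \<longleftrightarrow>
    (if a = tau \<and> (\<exists>w1. tr v tau w1 \<and> sbl u' w1) then conf_reward c' = Check
     else if a = tau \<and> sbl u' v then c' = Conf Spoiler (u',v) None None Star
     else conf_reward c' = Check \<or>
       (\<exists>q' v' r'. c' = Conf Spoiler (p,q') (Some(a,u')) (Some(v',Frown)) r' \<and> tr v tau v' \<and>
           (\<exists>n'. XP p a u' v' n' \<and> n' < xm p a u' v)) \<or>
       (\<exists>pq v' r'. c' = Conf Spoiler pq (Some(a,u')) (Some(v',Smile)) r'))"

definition YProg :: "'a \<Rightarrow> 's \<Rightarrow> 's \<Rightarrow> ('s,'a) conf \<Rightarrow> bool" where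
  "YProg a u' v c' \<longleftrightarrow> conf_reward c' = Check \<or>
     (\<exists>pq v' r'. c' = Conf Spoiler pq (Some(a,u')) (Some(v',Smile)) r' \<and> (\<exists>n'. YP u' v' n' \<and> n' < ym u' v))"

definition Prog :: "('s,'a) conf \<Rightarrow> ('s,'a) conf \<Rightarrow> bool" where
  "Prog c c' \<longleftrightarrow>
    (\<forall>p q a u' v r. c = Conf Duplicator (p,q) (Some(a,u')) (Some(v,Frown)) r \<longrightarrow> XProg p a u' v c') \<and>
    (\<forall>p q a u' v r. c = Conf Duplicator (p,q) (Some(a,u')) (Some(v,Smile)) r \<longrightarrow> YProg a u' v c')"

definition Step :: "('s,'a) conf \<Rightarrow> ('s,'a) conf \<Rightarrow> bool" where
  "Step c c' \<longleftrightarrow> game_move tr tau (Eset x y) c c' \<and> Inv c' \<and> Prog c c'"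

lemma Prog_X: "Prog (Conf Duplicator (p,q) (Some(a,u')) (Some(v,Frown)) r) c' \<longleftrightarrow> XProg p a u' v c'"
  by (simp add: Prog_def)

lemma Prog_Y: "Prog (Conf Duplicator (p,q) (Some(a,u')) (Some(v,Smile)) r) c' \<longleftrightarrow> YProg a u' v c'"
  by (simp add: Prog_def)

lemma Inv_G0: "sbl p q \<Longrightarrow> Inv (Conf Spoiler (p,q) None None r)"
  unfolding Inv_def by blast

lemma Inv_X: "tr p a u' \<Longrightarrow> sbl p q \<Longrightarrow> (x = Bm \<Longrightarrow> v = q) \<Longrightarrow> XOK p a u' v \<Longrightarrow>
   Inv (Conf ow (p,q) (Some(a,u')) (Some(v,Frown)) r)"
  unfolding Inv_def by blast

lemma Inv_Y: "sbl p q \<Longrightarrow> (y = Bm \<Longrightarrow> p = u' \<and> v = q) \<Longrightarrow> YP u' v n \<Longrightarrow>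
   Inv (Conf ow (p,q) (Some(a,u')) (Some(v,Smile)) r)"
  unfolding Inv_def by blast

lemma Init_XOK:
  assumes R: "sbl s t" and st: "tr s a s'"
  shows "XOK s a s' t"
  using sbl_clause[OF R st]
proof (elim disjE exE conjE)
  fix t' assume a: "a = tau" and tt: "tau_steps tr tau t t'" "sbl s t'" "sbl s' t'"
  show ?thesis
  proof (cases "t = t'")
    case True then show ?thesis unfolding XOK_def using a tt by blast
  next
    case False
    then have "tau_steps_plus tr tau t t'" using tsp_ne[OF tt(1)] by blast
    then obtain pr where pr: "tau_steps tr tau t pr" "tr pr tau t'"
      unfolding tau_steps_plus_def tau_steps_def using tranclp_last by fastforce
    obtain i where i: "((\<lambda>p q. tr p tau q) ^^ i) t pr" using ts_rp[OF pr(1)] by blast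
    have spr: "sbl s pr" using ST[OF R pr(1) ts_one[of tr, OF pr(2)] tt(2)] .
    have "XP s a s' t (i + 0)" unfolding XP_def
      by (intro exI[of _ i] exI[of _ 0] exI[of _ pr] exI[of _ t'] conjI) (use i pr a R spr tt in auto)
    then show ?thesis unfolding XOK_def by blast
  qed
next
  fix t' t1 t2 assume g: "gsteps tr tau x sbl s t t1" "tr t1 a t2" "gsteps tr tau y sbl s' t2 t'" "sbl s' t'"
  obtain i where i: "((\<lambda>p q. tr p tau q) ^^ i) t t1" using ts_rp[OF gsteps_ts[OF g(1)]] by blast
  obtain j where j: "((\<lambda>p q. tr p tau q) ^^ j) t2 t'" using ts_rp[OF gsteps_ts[OF g(3)]] by blast
  have "XP s a s' t (i + j)" unfolding XP_def
    using i j g(2,4) gsteps_RB[OF g(1)] gsteps_RB[OF g(3)] by blast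
  then show ?thesis unfolding XOK_def by blast
qed

lemma Inv_S:
  assumes I: "Inv c" and o: "conf_owner c = Spoiler" and mv: "game_move tr tau (Eset x y) c c'"
  shows "Inv c'"
proof -
  obtain p q cc m r where c: "c = Conf Spoiler (p,q) cc m r" using o by (cases c) auto
  have Rpq: "sbl p q" using I unfolding c Inv_def by auto
  have G: "cc = None \<or> Inv (Conf Duplicator (p,q) cc m Star)"
    using I unfolding c Inv_def by auto
  from mvS[OF mv[unfolded c]] show ?thesis
  proof (elim disjE exE conjE)
    assume A: "cc \<noteq> None" "c' = Conf Duplicator (p,q) cc m Star"
    then show ?thesis using G by metis
  next
    fix a s' assume "tr p a s'" "c' = Conf Duplicator (p,q) (Some(a,s')) (Some(q,Frown)) Star"
    then show ?thesis using Inv_X Init_XOK Rpq by blast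
  next
    fix a s' assume "tr p a s'" "c' = Conf Duplicator (p,q) (Some(a,s')) (Some(q,Frown)) Check"
    then show ?thesis using Inv_X Init_XOK Rpq by blast
  next
    fix a t' assume "tr q a t'" "c' = Conf Duplicator (q,p) (Some(a,t')) (Some(p,Frown)) Check"
    then show ?thesis using Inv_X Init_XOK sbl_sym[OF Rpq] by blast
  qed
qed

lemma stepX:
  assumes tru: "tr p a u'" and R: "sbl p q" and xv: "x = Bm \<Longrightarrow> v = q" and ok: "XOK p a u' v"
  shows "\<exists>c'. game_move tr tau (Eset x y) (Conf Duplicator (p,q) (Some(a,u')) (Some(v,Frown)) r) c' \<and>
     Inv c' \<and> XProg p a u' v c'"
proof (cases "a = tau \<and> (\<exists>w1. tr v tau w1 \<and> sbl u' w1)")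
  case True
  then obtain w1 where a: "a = tau" and w: "tr v tau w1" "sbl u' w1" by blast
  let ?c = "Conf Spoiler (u',w1) None None Check :: ('s,'a) conf"
  have "game_move tr tau (Eset x y) (Conf Duplicator (p,q) (Some(a,u')) (Some(v,Frown)) r) ?c"
    using w a by (auto intro: game_move.D2b)
  moreover have "Inv ?c" by (rule Inv_G0[OF w(2)])
  moreover have "XProg p a u' v ?c" unfolding XProg_def using True by simp
  ultimately show ?thesis by blast
next
  case nC1: False
  show ?thesis
  proof (cases "a = tau \<and> sbl u' v")
    case True
    let ?c = "Conf Spoiler (u',v) None None Star :: ('s,'a) conf"
    have "game_move tr tau (Eset x y) (Conf Duplicator (p,q) (Some(a,u')) (Some(v,Frown)) r) ?c"
      using True by (auto intro: game_move.D1)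
    moreover have "Inv ?c" using True by (blast intro: Inv_G0)
    moreover have "XProg p a u' v ?c" unfolding XProg_def if_not_P[OF nC1] if_P[OF True] by simp
    ultimately show ?thesis by blast
  next
    case nC2: False
    have XPr: "XProg p a u' v c' \<longleftrightarrow> (conf_reward c' = Check \<or>
       (\<exists>q' v' r'. c' = Conf Spoiler (p,q') (Some(a,u')) (Some(v',Frown)) r' \<and> tr v tau v' \<and>
           (\<exists>n'. XP p a u' v' n' \<and> n' < xm p a u' v)) \<or>
       (\<exists>pq v' r'. c' = Conf Spoiler pq (Some(a,u')) (Some(v',Smile)) r'))" for c'
      unfolding XProg_def if_not_P[OF nC1] if_not_P[OF nC2] by (rule refl)
    obtain n where "XP p a u' v n" using ok nC2 unfolding XOK_def by blast
    then have X0: "XP p a u' v (xm p a u' v)" unfolding xm_def by (rule LeastI)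
    then obtain i j t1 t2 t' where nij: "xm p a u' v = i + j" and pi: "((\<lambda>p q. tr p tau q) ^^ i) v t1"
      and st: "tr t1 a t2" and pj: "((\<lambda>p q. tr p tau q) ^^ j) t2 t'"
      and cx: "x = Bm \<longrightarrow> sbl p v \<and> sbl p t1" and cy: "y = Bm \<longrightarrow> sbl u' t2" and fin: "sbl u' t'"
      unfolding XP_def by blast
    show ?thesis
    proof (cases i)
      case (Suc i')
      obtain v1 where v1: "tr v tau v1" "((\<lambda>p q. tr p tau q) ^^ i') v1 t1"
        using relpowp_Suc_D2[where P="\<lambda>p q. tr p tau q"] pi Suc by blast
      have Rv1: "sbl p v1" if xB: "x = Bm"
        using ST[of p v v1 t1] cx xB ts_one[of tr, OF v1(1)] rp_ts[OF v1(2)] by blast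
      have XP1: "XP p a u' v1 (i' + j)" unfolding XP_def
        using v1(2) st pj cx cy fin Rv1 by blast
      have lt: "i' + j < xm p a u' v" using nij Suc by simp
      show ?thesis
      proof (cases x)
        case Om
        let ?c = "Conf Spoiler (p,q) (Some(a,u')) (Some(v1,Frown)) Star :: ('s,'a) conf"
        have "Frown \<in> Eset x y" using Om by (simp add: Eset_Frown)
        then have "game_move tr tau (Eset x y) (Conf Duplicator (p,q) (Some(a,u')) (Some(v,Frown)) r) ?c"
          using v1 by (auto intro: game_move.D3c)
        moreover have "Inv ?c" by (rule Inv_X[OF tru R]) (use Om XP1 XOK_def in auto)
        moreover have "XProg p a u' v ?c" unfolding XPr using v1 XP1 lt by blast
        ultimately show ?thesis by blast
      next
        case Bm
        let ?c = "Conf Spoiler (p,v1) (Some(a,u')) (Some(v1,Frown)) Star :: ('s,'a) conf"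
        have "game_move tr tau (Eset x y) (Conf Duplicator (p,q) (Some(a,u')) (Some(v,Frown)) r) ?c"
          using v1 by (auto intro: game_move.D3a)
        moreover have "Inv ?c" by (rule Inv_X[OF tru Rv1[OF Bm]]) (use XP1 XOK_def in auto)
        moreover have "XProg p a u' v ?c" unfolding XPr using v1 XP1 lt by blast
        ultimately show ?thesis by blast
      qed
    next
      case 0
      then have t1v: "t1 = v" using pi by simp
      show ?thesis
      proof (cases j)
        case 0
        then have "t2 = t'" using pj by simp
        let ?c = "Conf Spoiler (u',t2) None None Check :: ('s,'a) conf"
        have "game_move tr tau (Eset x y) (Conf Duplicator (p,q) (Some(a,u')) (Some(v,Frown)) r) ?c"
          using st t1v by (auto intro: game_move.D2b)
        moreover have "Inv ?c" using Inv_G0 fin \<open>t2 = t'\<close> by blast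
        moreover have "XProg p a u' v ?c" unfolding XPr by simp
        ultimately show ?thesis by blast
      next
        case (Suc j')
        have YP1: "YP u' t2 j" unfolding YP_def using Suc pj fin cy by blast
        show ?thesis
        proof (cases y)
          case Om
          let ?c = "Conf Spoiler (p,q) (Some(a,u')) (Some(t2,Smile)) Star :: ('s,'a) conf"
          have "Smile \<in> Eset x y" using Om by (simp add: Eset_Smile)
          then have "game_move tr tau (Eset x y) (Conf Duplicator (p,q) (Some(a,u')) (Some(v,Frown)) r) ?c"
            using st t1v by (auto intro: game_move.D2c)
          moreover have "Inv ?c" by (rule Inv_Y[OF R _ YP1]) (use Om in auto)
          moreover have "XProg p a u' v ?c" unfolding XPr by blast
          ultimately show ?thesis by blast
        next
          case Bm
          let ?c = "Conf Spoiler (u',t2) (Some(a,u')) (Some(t2,Smile)) Star :: ('s,'a) conf"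
          have "game_move tr tau (Eset x y) (Conf Duplicator (p,q) (Some(a,u')) (Some(v,Frown)) r) ?c"
            using st t1v by (auto intro: game_move.D2a)
          moreover have "Inv ?c" by (rule Inv_Y[OF _ _ YP1]) (use Bm cy in auto)
          moreover have "XProg p a u' v ?c" unfolding XPr by blast
          ultimately show ?thesis by blast
        qed
      qed
    qed
  qed
qed

lemma stepY:
  assumes R: "sbl p q" and yb: "y = Bm \<Longrightarrow> p = u' \<and> v = q" and ok: "YP u' v n"
  shows "\<exists>c'. game_move tr tau (Eset x y) (Conf Duplicator (p,q) (Some(a,u')) (Some(v,Smile)) r) c' \<and>
     Inv c' \<and> YProg a u' v c'"
proof -
  have Y0: "YP u' v (ym u' v)" unfolding ym_def by (rule LeastI[of "\<lambda>n. YP u' v n", OF ok])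
  then obtain t' where pos: "0 < ym u' v" and pa: "((\<lambda>p q. tr p tau q) ^^ (ym u' v)) v t'"
    and st': "sbl u' t'" and yv: "y = Bm \<longrightarrow> sbl u' v" unfolding YP_def by blast
  obtain n1 where n1: "ym u' v = Suc n1" using pos gr0_implies_Suc by blast
  obtain v1 where v1: "tr v tau v1" "((\<lambda>p q. tr p tau q) ^^ n1) v1 t'"
    using relpowp_Suc_D2[where P="\<lambda>p q. tr p tau q"] pa n1 by metis
  show ?thesis
  proof (cases n1)
    case 0
    then have "v1 = t'" using v1(2) by simp
    let ?c = "Conf Spoiler (u',t') None None Check :: ('s,'a) conf"
    have "game_move tr tau (Eset x y) (Conf Duplicator (p,q) (Some(a,u')) (Some(v,Smile)) r) ?c"
      using v1(1) \<open>v1 = t'\<close> by (auto intro: game_move.D3b)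
    moreover have "Inv ?c" by (rule Inv_G0[OF st'])
    moreover have "YProg a u' v ?c" unfolding YProg_def by simp
    ultimately show ?thesis by blast
  next
    case (Suc n2)
    have Rv1: "sbl u' v1" if yB: "y = Bm"
      using ST[of u' v v1 t'] yv yB ts_one[of tr, OF v1(1)] rp_ts[OF v1(2)] st' by blast
    have YP1: "YP u' v1 n1" unfolding YP_def using Suc v1(2) st' Rv1 by blast
    have lt: "n1 < ym u' v" using n1 by simp
    show ?thesis
    proof (cases y)
      case Om
      let ?c = "Conf Spoiler (p,q) (Some(a,u')) (Some(v1,Smile)) Star :: ('s,'a) conf"
      have "Smile \<in> Eset x y" using Om by (simp add: Eset_Smile)
      then have "game_move tr tau (Eset x y) (Conf Duplicator (p,q) (Some(a,u')) (Some(v,Smile)) r) ?c"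
        using v1 by (auto intro: game_move.D3c)
      moreover have "Inv ?c" by (rule Inv_Y[OF R _ YP1]) (use Om in auto)
      moreover have "YProg a u' v ?c" unfolding YProg_def using YP1 lt by blast
      ultimately show ?thesis by blast
    next
      case Bm
      let ?c = "Conf Spoiler (p,v1) (Some(a,u')) (Some(v1,Smile)) Star :: ('s,'a) conf"
      have pu: "p = u'" using yb Bm by blast
      have "game_move tr tau (Eset x y) (Conf Duplicator (p,q) (Some(a,u')) (Some(v,Smile)) r) ?c"
        using v1 by (auto intro: game_move.D3a)
      moreover have "Inv ?c" by (rule Inv_Y[OF _ _ YP1]) (use Rv1[OF Bm] pu in auto)
      moreover have "YProg a u' v ?c" unfolding YProg_def using YP1 lt by blast
      ultimately show ?thesis by blast
    qed
  qed
qed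

lemma step_exists:
  assumes I: "Inv c" and o: "conf_owner c = Duplicator"
  shows "\<exists>c'. Step c c'"
proof -
  from I o have
    "(\<exists>p q a u' v r. c = Conf Duplicator (p,q) (Some(a,u')) (Some(v,Frown)) r \<and> tr p a u' \<and> sbl p q \<and>
        (x = Bm \<longrightarrow> v = q) \<and> XOK p a u' v) \<or>
    (\<exists>p q a u' v r. c = Conf Duplicator (p,q) (Some(a,u')) (Some(v,Smile)) r \<and> sbl p q \<and>
        (y = Bm \<longrightarrow> p = u' \<and> v = q) \<and> (\<exists>n. YP u' v n))"
    unfolding Inv_def by auto
  then show ?thesis
  proof (elim disjE exE conjE)
    fix p q a u' v r assume c: "c = Conf Duplicator (p,q) (Some(a,u')) (Some(v,Frown)) r"
      and h: "tr p a u'" "sbl p q" "x = Bm \<longrightarrow> v = q" "XOK p a u' v"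
    obtain c' where "game_move tr tau (Eset x y) c c'" "Inv c'" "XProg p a u' v c'"
      using stepX[OF h(1,2) _ h(4), of r] h(3) c by blast
    then show ?thesis unfolding Step_def c Prog_X by blast
  next
    fix p q a u' v r n assume c: "c = Conf Duplicator (p,q) (Some(a,u')) (Some(v,Smile)) r"
      and h: "sbl p q" "y = Bm \<longrightarrow> p = u' \<and> v = q" "YP u' v n"
    obtain c' where "game_move tr tau (Eset x y) c c'" "Inv c'" "YProg a u' v c'"
      using stepY[OF h(1) _ h(3), of a r] h(2) c by blast
    then show ?thesis unfolding Step_def c Prog_Y by blast
  qed
qed

definition strat :: "('s,'a) conf list \<Rightarrow> ('s,'a) conf" where
  "strat h = (if \<exists>c'. Step (last h) c' then SOME c'. Step (last h) c'
              else SOME c'. game_move tr tau (Eset x y) (last h) c')"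

lemma strat_step: "Inv (last h) \<Longrightarrow> conf_owner (last h) = Duplicator \<Longrightarrow> Step (last h) (strat h)"
  using step_exists unfolding strat_def by (metis (mono_tags, lifting) someI_ex)

lemma strat_ok: "dup_strategy tr tau (Eset x y) strat"
  unfolding dup_strategy_def
proof (intro allI impI)
  fix h assume A: "h \<noteq> [] \<and> conf_owner (last h) = Duplicator \<and> (\<exists>c'. game_move tr tau (Eset x y) (last h) c')"
  show "game_move tr tau (Eset x y) (last h) (strat h)"
  proof (cases "\<exists>c'. Step (last h) c'")
    case True
    then have "Step (last h) (strat h)" unfolding strat_def by (simp add: someI_ex)
    then show ?thesis by (simp add: Step_def)
  next
    case False
    have "strat h = (SOME c'. game_move tr tau (Eset x y) (last h) c')" unfolding strat_def if_not_P[OF False] by (rule refl)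
    then show ?thesis using someI_ex[of "\<lambda>c'. game_move tr tau (Eset x y) (last h) c'"] A by simp
  qed
qed

lemma owner_cases: "ow = Spoiler \<or> ow = Duplicator" by (cases ow) auto

lemma Inv_G0D: "Inv (Conf Spoiler (p,q) None None r) \<Longrightarrow> sbl p q"
  unfolding Inv_def by auto

lemma Inv_next:
  assumes I: "Inv c" and mv: "game_move tr tau (Eset x y) c c'"
    and sd: "conf_owner c = Duplicator \<Longrightarrow> c' = strat h" and lh: "last h = c"
  shows "Inv c'"
proof (cases "conf_owner c")
  case Spoiler then show ?thesis using Inv_S[OF I _ mv] by simp
next
  case Duplicator
  then have "Step c c'" using strat_step[of h] I sd lh by simp
  then show ?thesis by (simp add: Step_def)
qed

lemma fp_Inv:
  assumes fp: "finite_play tr tau (Eset x y) strat c0 h" and I0: "Inv c0"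
  shows "i < length h \<Longrightarrow> Inv (h ! i)"
proof (induction i)
  case 0 then show ?case using fp I0 by (simp add: finite_play_def)
next
  case (Suc i)
  have h: "game_move tr tau (Eset x y) (h ! i) (h ! Suc i) \<and>
        (conf_owner (h ! i) = Duplicator \<longrightarrow> h ! Suc i = strat (take (Suc i) h))"
    using fp Suc.prems unfolding finite_play_def by blast
  have "last (take (Suc i) h) = h ! i" using Suc.prems by (metis Suc_lessD last_snoc take_Suc_conv_app_nth)
  then show ?case using Inv_next[of "h ! i" "h ! Suc i" "take (Suc i) h"] h Suc by simp
qed

lemma ip_Inv:
  assumes ip: "infinite_play tr tau (Eset x y) strat c0 pl" and I0: "Inv c0"
  shows "Inv (pl i)"
proof (induction i)
  case 0 then show ?case using ip I0 by (simp add: infinite_play_def)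
next
  case (Suc i)
  have h: "game_move tr tau (Eset x y) (pl i) (pl (Suc i)) \<and>
        (conf_owner (pl i) = Duplicator \<longrightarrow> pl (Suc i) = strat (map pl [0..<Suc i]))"
    using ip unfolding infinite_play_def by blast
  have "last (map pl [0..<Suc i]) = pl i" by simp
  then show ?case using Inv_next[of "pl i" "pl (Suc i)" "map pl [0..<Suc i]"] h Suc by simp
qed

lemma ip_Step:
  assumes ip: "infinite_play tr tau (Eset x y) strat c0 pl" and I0: "Inv c0"
    and o: "conf_owner (pl i) = Duplicator"
  shows "Step (pl i) (pl (Suc i))"
proof -
  have h: "pl (Suc i) = strat (map pl [0..<Suc i])"
    using ip o unfolding infinite_play_def by blast
  have "last (map pl [0..<Suc i]) = pl i" by simp
  then show ?thesis using strat_step[of "map pl [0..<Suc i]"] ip_Inv[OF ip I0, of i] o h by simp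
qed

lemma buchi:
  assumes ip: "infinite_play tr tau (Eset x y) strat c0 pl" and I0: "Inv c0"
  shows "\<exists>\<^sub>\<infinity>i. conf_reward (pl i) = Check"
proof (rule ccontr)
  assume "\<not> (\<exists>\<^sub>\<infinity>i. conf_reward (pl i) = Check)"
  then have "\<forall>\<^sub>F i in sequentially. conf_reward (pl i) \<noteq> Check"
    unfolding cofinite_eq_sequentially by (simp add: not_frequently)
  then obtain N where tailN: "\<forall>i\<ge>N. conf_reward (pl i) \<noteq> Check"
    unfolding eventually_sequentially by blast
  have tail: "conf_reward (pl i) \<noteq> Check" if "i \<ge> N" for i using tailN that by blast
  have I: "Inv (pl i)" for i by (rule ip_Inv[OF ip I0])
  have MV: "game_move tr tau (Eset x y) (pl i) (pl (Suc i))" for i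
    using ip unfolding infinite_play_def by blast
  have STP: "Step (pl i) (pl (Suc i))" if "conf_owner (pl i) = Duplicator" for i
    by (rule ip_Step[OF ip I0 that])
  have Spl: "(cc \<noteq> None \<and> pl (Suc i) = Conf Duplicator (p,q) cc m Star) \<or>
      (cc = None \<and> (\<exists>a s'. tr p a s' \<and> pl (Suc i) = Conf Duplicator (p,q) (Some(a,s')) (Some(q, Frown)) Star))"
    if "i \<ge> N" "pl i = Conf Spoiler (p,q) cc m r" for i p q cc m r
  proof -
    have tc: "conf_reward (pl (Suc i)) \<noteq> Check" using tail that(1) by simp
    from mvS[OF MV[of i, unfolded that(2)]] show ?thesis
    proof (elim disjE exE conjE)
      fix a s' assume "pl (Suc i) = Conf Duplicator (p, q) (Some (a, s')) (Some (q, Frown)) Check"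
      then show ?thesis using tc by simp
    next
      fix a t' assume "pl (Suc i) = Conf Duplicator (q, p) (Some (a, t')) (Some (p, Frown)) Check"
      then show ?thesis using tc by simp
    qed auto
  qed
  have ClaimC: "False" if "i \<ge> N" "pl i = Conf Duplicator (p,q) (Some(a,u')) (Some(v,Smile)) r"
    "ym u' v = n" for n i p q a u' v r
    using that
  proof (induction n arbitrary: i p q a u' v r rule: less_induct)
    case (less n)
    have "YProg a u' v (pl (Suc i))" using STP[of i] less.prems(2) by (simp add: Step_def Prog_Y)
    then obtain pq v' r' n' where c1: "pl (Suc i) = Conf Spoiler pq (Some(a,u')) (Some(v',Smile)) r'"
      and Y1: "YP u' v' n'" and lt: "n' < ym u' v"
      unfolding YProg_def using tail[of "Suc i"] less.prems(1) by auto
    obtain p' q' where pq: "pq = (p',q')" by (cases pq)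
    have c2: "pl (Suc (Suc i)) = Conf Duplicator (p',q') (Some(a,u')) (Some(v',Smile)) Star"
      using Spl[of "Suc i" p' q' "Some(a,u')" "Some(v',Smile)" r'] c1 pq less.prems(1) by auto
    have "ym u' v' \<le> n'" unfolding ym_def by (rule Least_le[of "\<lambda>n. YP u' v' n", OF Y1])
    then have "ym u' v' < n" using lt less.prems(3) by simp
    then show False using less.IH[of "ym u' v'" "Suc (Suc i)"] c2 less.prems(1) by simp
  qed
  have ClaimB: "False" if "i \<ge> N" "pl i = Conf Duplicator (p,q) (Some(a,u')) (Some(v,Frown)) r"
    "\<not> (a = tau \<and> sbl u' v)" "xm p a u' v = n" for n i p q a u' v r
    using that
  proof (induction n arbitrary: i q v r rule: less_induct)
    case (less n)
    have XP: "XProg p a u' v (pl (Suc i))" using STP[of i] less.prems(2) by (simp add: Step_def Prog_X)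
    have tc: "conf_reward (pl (Suc i)) \<noteq> Check" using tail less.prems(1) by simp
    show False
    proof (cases "a = tau \<and> (\<exists>w1. tr v tau w1 \<and> sbl u' w1)")
      case True
      have "conf_reward (pl (Suc i)) = Check" using XP unfolding XProg_def if_P[OF True] .
      then show False using tc by simp
    next
      case nC1: False
      have "(\<exists>q' v' r'. pl (Suc i) = Conf Spoiler (p,q') (Some(a,u')) (Some(v',Frown)) r' \<and> tr v tau v' \<and>
           (\<exists>n'. XP p a u' v' n' \<and> n' < xm p a u' v)) \<or>
       (\<exists>pq v' r'. pl (Suc i) = Conf Spoiler pq (Some(a,u')) (Some(v',Smile)) r')"
        using XP tc unfolding XProg_def if_not_P[OF nC1] if_not_P[OF less.prems(3)] by blast
      then show False
      proof (elim disjE exE conjE)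
        fix q' v' r' n' assume c1: "pl (Suc i) = Conf Spoiler (p,q') (Some(a,u')) (Some(v',Frown)) r'"
          and st: "tr v tau v'" and X1: "XP p a u' v' n'" and lt: "n' < xm p a u' v"
        have c2: "pl (Suc (Suc i)) = Conf Duplicator (p,q') (Some(a,u')) (Some(v',Frown)) Star"
          using Spl[of "Suc i" p q' "Some(a,u')" "Some(v',Frown)" r'] c1 less.prems(1) by auto
        have nC2': "\<not> (a = tau \<and> sbl u' v')" using nC1 st by blast
        have "xm p a u' v' \<le> n'" unfolding xm_def by (rule Least_le[of "\<lambda>n. XP p a u' v' n", OF X1])
        then have "xm p a u' v' < n" using lt less.prems(4) by simp
        then show False using less.IH[of "xm p a u' v'" "Suc (Suc i)" q' v' Star] c2 less.prems(1) nC2' by simp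
      next
        fix pq v' r' assume c1: "pl (Suc i) = Conf Spoiler pq (Some(a,u')) (Some(v',Smile)) r'"
        obtain p' q' where pq: "pq = (p',q')" by (cases pq)
        have c2: "pl (Suc (Suc i)) = Conf Duplicator (p',q') (Some(a,u')) (Some(v',Smile)) Star"
          using Spl[of "Suc i" p' q' "Some(a,u')" "Some(v',Smile)" r'] c1 pq less.prems(1) by auto
        show False using ClaimC[OF _ c2] less.prems(1) by simp
      qed
    qed
  qed
  have ClaimB': "a = tau \<and> sbl u' v \<and> \<not> (\<exists>w1. tr v tau w1 \<and> sbl u' w1) \<and>
      pl (Suc i) = Conf Spoiler (u',v) None None Star"
    if "i \<ge> N" "pl i = Conf Duplicator (p,q) (Some(a,u')) (Some(v,Frown)) r" for i p q a u' v r
  proof -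
    have C2: "a = tau \<and> sbl u' v" using ClaimB[OF that] by blast
    have XP: "XProg p a u' v (pl (Suc i))" using STP[of i] that(2) by (simp add: Step_def Prog_X)
    have tc: "conf_reward (pl (Suc i)) \<noteq> Check" using tail that(1) by simp
    have nC1: "\<not> (a = tau \<and> (\<exists>w1. tr v tau w1 \<and> sbl u' w1))"
    proof
      assume C1: "a = tau \<and> (\<exists>w1. tr v tau w1 \<and> sbl u' w1)"
      have "conf_reward (pl (Suc i)) = Check" using XP unfolding XProg_def if_P[OF C1] .
      then show False using tc by simp
    qed
    have "pl (Suc i) = Conf Spoiler (u',v) None None Star"
      using XP unfolding XProg_def if_not_P[OF nC1] if_P[OF C2] .
    then show ?thesis using C2 nC1 by blast
  qed
  have G0ex: "\<exists>i0 p0 q0 r0. i0 \<ge> N \<and> pl i0 = Conf Spoiler (p0,q0) None None r0"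
  proof -
    have "Inv (pl N)" by (rule I)
    then have "(\<exists>p q r. pl N = Conf Spoiler (p,q) None None r) \<or>
      (\<exists>ow p q a u' v r. pl N = Conf ow (p,q) (Some(a,u')) (Some(v,Frown)) r) \<or>
      (\<exists>ow p q a u' v r. pl N = Conf ow (p,q) (Some(a,u')) (Some(v,Smile)) r)"
      unfolding Inv_def by blast
    then show ?thesis
    proof (elim disjE exE)
      fix p q r assume "pl N = Conf Spoiler (p,q) None None r"
      then show ?thesis by blast
    next
      fix ow p q a u' v r assume c: "pl N = Conf ow (p,q) (Some(a,u')) (Some(v,Frown)) r"
      show ?thesis
      proof (cases ow)
        case Spoiler
        then have "pl (Suc N) = Conf Duplicator (p,q) (Some(a,u')) (Some(v,Frown)) Star"
          using Spl[of N p q "Some(a,u')" "Some(v,Frown)" r] c by auto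
        then have "pl (Suc (Suc N)) = Conf Spoiler (u',v) None None Star" using ClaimB'[of "Suc N"] by simp
        then show ?thesis by (intro exI[of _ "Suc (Suc N)"]) auto
      next
        case Duplicator
        then have "pl (Suc N) = Conf Spoiler (u',v) None None Star" using ClaimB'[of N] c by simp
        then show ?thesis by (intro exI[of _ "Suc N"]) auto
      qed
    next
      fix ow p q a u' v r assume c: "pl N = Conf ow (p,q) (Some(a,u')) (Some(v,Smile)) r"
      show ?thesis
      proof (cases ow)
        case Spoiler
        then have "pl (Suc N) = Conf Duplicator (p,q) (Some(a,u')) (Some(v,Smile)) Star"
          using Spl[of N p q "Some(a,u')" "Some(v,Smile)" r] c by auto
        then have False using ClaimC[OF _ _ refl] by (metis le_Suc_eq order_refl)
        then show ?thesis ..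
      next
        case Duplicator
        then have False using ClaimC[OF _ c[unfolded Duplicator] refl] by simp
        then show ?thesis ..
      qed
    qed
  qed
  then obtain i0 p0 q0 r0 where i0: "i0 \<ge> N" "pl i0 = Conf Spoiler (p0,q0) None None r0" by blast
  have adv: "\<exists>s'. tr p tau s' \<and> sbl p q0 \<and> \<not> (\<exists>w1. tr q0 tau w1 \<and> sbl s' w1) \<and>
       pl (Suc (Suc i)) = Conf Spoiler (s',q0) None None Star"
    if iN: "i \<ge> N" and ci: "pl i = Conf Spoiler (p,q0) None None r" for i p r
  proof -
    have Rp: "sbl p q0" using I[of i] ci Inv_G0D by simp
    obtain a s' where as: "tr p a s'" "pl (Suc i) = Conf Duplicator (p,q0) (Some(a,s')) (Some(q0, Frown)) Star"
      using Spl[OF iN ci] by auto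
    then show ?thesis using ClaimB'[of "Suc i"] iN Rp by auto
  qed
  define PP where "PP k = (case pl (i0 + 2*k) of Conf _ pq _ _ _ \<Rightarrow> fst pq)" for k
  have CH: "\<exists>r. pl (i0 + 2*k) = Conf Spoiler (PP k, q0) None None r" for k
  proof (induction k)
    case 0 then show ?case using i0 by (simp add: PP_def)
  next
    case (Suc k)
    then obtain r where c: "pl (i0 + 2*k) = Conf Spoiler (PP k, q0) None None r" by blast
    obtain s' where "pl (Suc (Suc (i0 + 2*k))) = Conf Spoiler (s',q0) None None Star"
      using adv[OF _ c] i0(1) by auto
    moreover have "i0 + 2 * Suc k = Suc (Suc (i0 + 2*k))" by simp
    ultimately show ?case by (simp add: PP_def)
  qed
  have CH2: "tr (PP k) tau (PP (Suc k)) \<and> sbl (PP k) q0 \<and> \<not> (\<exists>w1. tr q0 tau w1 \<and> sbl (PP (Suc k)) w1)" for k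
  proof -
    obtain r where c: "pl (i0 + 2*k) = Conf Spoiler (PP k, q0) None None r" using CH by blast
    obtain r' where c': "pl (i0 + 2*Suc k) = Conf Spoiler (PP (Suc k), q0) None None r'" using CH by blast
    obtain s' where s': "tr (PP k) tau s'" "sbl (PP k) q0" "\<not> (\<exists>w1. tr q0 tau w1 \<and> sbl s' w1)"
       "pl (Suc (Suc (i0 + 2*k))) = Conf Spoiler (s',q0) None None Star"
      using adv[OF _ c] i0(1) by auto
    have "i0 + 2 * Suc k = Suc (Suc (i0 + 2*k))" by simp
    then have "s' = PP (Suc k)" using c' s'(4) by simp
    then show ?thesis using s' by blast
  qed
  define f where "f k = PP (Suc k)" for k
  have fpath: "\<forall>i. tr (f i) tau (f (Suc i))" using CH2 by (simp add: f_def)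
  have "sbl (f 0) q0" using CH2[of 1] by (simp add: f_def)
  then obtain t' k where tk: "tau_steps_plus tr tau q0 t'" "sbl (f k) t'"
    using sbl_div[OF _ refl fpath] by blast
  obtain w1 where w1: "tr q0 tau w1" "tau_steps tr tau w1 t'"
    using tk(1) unfolding tau_steps_plus_def tau_steps_def by (blast dest: tranclpD)
  have "sbl (f k) q0" using CH2[of "Suc k"] by (simp add: f_def)
  then have "sbl (f k) w1" using ST[OF _ ts_one[of tr, OF w1(1)] w1(2) tk(2)] by blast
  then show False using CH2[of k] w1(1) by (simp add: f_def)
qed

lemma bisim_win:
  assumes R: "sbl s t"
  shows "dup_wins tr tau (Eset x y) strat (Conf Spoiler (s,t) None None Star)"
  unfolding dup_wins_def
proof (intro conjI allI impI)
  show "dup_strategy tr tau (Eset x y) strat" by (rule strat_ok)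
next
  have I0: "Inv (Conf Spoiler (s,t) None None Star)" by (rule Inv_G0[OF R])
  fix ps assume A: "finite_play tr tau (Eset x y) strat (Conf Spoiler (s, t) None None Star) ps \<and>
         \<not> (\<exists>c'. game_move tr tau (Eset x y) (last ps) c')"
  then have ne: "ps \<noteq> []" by (simp add: finite_play_def)
  then have "last ps = ps ! (length ps - 1)" by (simp add: last_conv_nth)
  then have "Inv (last ps)" using fp_Inv[OF conjunct1[OF A] I0, of "length ps - 1"] ne by simp
  show "conf_owner (last ps) = Spoiler"
  proof (rule ccontr)
    assume "conf_owner (last ps) \<noteq> Spoiler"
    then have "conf_owner (last ps) = Duplicator" using owner_cases by blast
    then obtain c' where "Step (last ps) c'" using step_exists \<open>Inv (last ps)\<close> by blast
    then show False using A by (simp add: Step_def)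
  qed
next
  fix p assume "infinite_play tr tau (Eset x y) strat (Conf Spoiler (s, t) None None Star) p"
  then show "\<exists>\<^sub>\<infinity>i. conf_reward (p i) = Check" using buchi Inv_G0[OF R] by blast
qed

end


theorem theorem6p10:
  fixes tr :: "'s \<Rightarrow> 'a \<Rightarrow> 's \<Rightarrow> bool" and tau :: 'a and x y :: mode
  shows "bisimilar_ed tr tau x y = game_equiv tr tau (Eset x y)"
proof (intro ext iffI)
  fix s t
  assume "bisimilar_ed tr tau x y s t"
  then obtain R where "generic_bisim_ed tr tau x y R" "R s t" unfolding bisimilar_ed_def by blast
  then have "sbl tr tau x y s t" by (intro sbb_le ed_sbb)
  then have "dup_wins tr tau (Eset x y) (strat tr tau x y) (Conf Spoiler (s,t) None None Star)"
    by (rule bisim_win)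
  then show "game_equiv tr tau (Eset x y) s t"
    unfolding game_equiv_def by blast
next
  fix s t
  assume "game_equiv tr tau (Eset x y) s t"
  then show "bisimilar_ed tr tau x y s t" by (rule game_to_bisim)
qed


end
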